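(* Let $\mathbb{T}$ be a geometric theory over $\Sigma$ with enough $\mathbb{S}$-indexed models. The functor $\mathcal{M}:\mathcal{C}_{\mathbb{T}}\to\mathrm{Sh}_{I_{\mathbb{T}}}(M_{\mathbb{T}})$, sending $\{\mathbf{x}\mid\phi\}$ to the equivariant sheaf $([\![\mathbf{x}\mid\phi]\!]\xrightarrow{\pi_1}M_{\mathbb{T}},\theta)$ and each arrow to the induced map, is full.
   Context: $\Sigma$ is a single-sorted first-order signature with equality, $\kappa\geq|\Sigma|+\aleph_0$ an infinite cardinal, $\mathbb{S}$ a fixed set of cardinality at least $\kappa$. $M_{\mathbb{T}}$ is the set of $\mathbb{T}$-models whose underlying set is a quotient of a subset of $\mathbb{S}$ (elements $[a]$), $I_{\mathbb{T}}$ the set of isomorphisms between them, with domain/codomain $d,c$. Topologies: $M_{\mathbb{T}}$ has the coarsest topology containing $\{\mathbf{M}:[a]\in\mathbf{M}\}$, $\{\mathbf{M}:[\mathbf{a}]\in R^{\mathbf{M}}\}$ (relation symbols incl.\ equality), $\{\mathbf{M}:f^{\mathbf{M}}([\mathbf{a}])=[b]\}$ (function symbols); $I_{\mathbb{T}}$ the coarsest making $d,c$ continuous and containing $\{\mathbf{f}:[a]\in d(\mathbf{f}),[b]\in c(\mathbf{f}),\mathbf{f}([a])=[b]\}$. $\mathbb{T}$ has enough $\mathbb{S}$-indexed models if every geometric sequent true in all of $M_{\mathbb{T}}$ is provable. $\mathcal{C}_{\mathbb{T}}$ is the syntactic category of $\mathbb{T}$. $[\![\mathbf{x}\mid\phi]\!]=\{(\mathbf{M},[\mathbf{a}]):\mathbf{M}\in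 M_{\mathbb{T}},[\mathbf{a}]\in\phi^{\mathbf{M}}\}$ carries the coarsest topology making the projection $\pi_1$ continuous and such that for every tuple $\mathbf{a}$ the image of $\mathbf{M}\mapsto(\mathbf{M},[\mathbf{a}])$ on $\{\mathbf{M}:[\mathbf{a}]\in\phi^{\mathbf{M}}\}$ is open; $\theta(\mathbf{f}:\mathbf{M}\to\mathbf{N},(\mathbf{M},[\mathbf{a}]))=(\mathbf{N},\mathbf{f}([\mathbf{a}]))$. $\mathrm{Sh}_{I_{\mathbb{T}}}(M_{\mathbb{T}})$ is the topos of equivariant sheaves on $I_{\mathbb{T}}\rightrightarrows M_{\mathbb{T}}$. *)

theory Defs
  imports "HOL-Analysis.Abstract_Topology"
begin

text \<open>Signature: function symbols of type 'f with arities af, relation symbols of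
type 'r with arities ar; equality is built in.\<close>

datatype 'f trm = Var nat | Fun 'f "'f trm list"

datatype ('f, 'r, 'd) fm =
    Rel 'r "'f trm list"
  | Eq "'f trm" "'f trm"
  | Top
  | Conj "('f, 'r, 'd) fm" "('f, 'r, 'd) fm"
  | Disj "'d set" "'d \<Rightarrow> ('f, 'r, 'd) fm"
  | Exi nat "('f, 'r, 'd) fm"

primrec FVt :: "'f trm \<Rightarrow> nat set" where
  "FVt (Var v) = {v}"
| "FVt (Fun f ts) = \<Union>(set (map FVt ts))"

primrec wft :: "('f \<Rightarrow> nat) \<Rightarrow> 'f trm \<Rightarrow> bool" where
  "wft af (Var v) = True"
| "wft af (Fun f ts) = (length ts = af f \<and> list_all id (map (wft af) ts))"

primrec FV :: "('f, 'r, 'd) fm \<Rightarrow> nat set" where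
  "FV (Rel r ts) = (\<Union>t\<in>set ts. FVt t)"
| "FV (Eq s t) = FVt s \<union> FVt t"
| "FV Top = {}"
| "FV (Conj \<phi> \<psi>) = FV \<phi> \<union> FV \<psi>"
| "FV (Disj I F) = (\<Union>i\<in>I. FV (F i))"
| "FV (Exi v \<phi>) = FV \<phi> - {v}"

primrec wff :: "('f \<Rightarrow> nat) \<Rightarrow> ('r \<Rightarrow> nat) \<Rightarrow> ('f, 'r, 'd) fm \<Rightarrow> bool" where
  "wff af ar (Rel r ts) = (length ts = ar r \<and> (\<forall>t\<in>set ts. wft af t))"
| "wff af ar (Eq s t) = (wft af s \<and> wft af t)"
| "wff af ar Top = True"
| "wff af ar (Conj \<phi> \<psi>) = (wff af ar \<phi> \<and> wff af ar \<psi>)"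
| "wff af ar (Disj I F) = (\<forall>i\<in>I. wff af ar (F i))"
| "wff af ar (Exi v \<phi>) = wff af ar \<phi>"

primrec substt :: "(nat \<Rightarrow> 'f trm) \<Rightarrow> 'f trm \<Rightarrow> 'f trm" where
  "substt \<sigma> (Var v) = \<sigma> v"
| "substt \<sigma> (Fun f ts) = Fun f (map (substt \<sigma>) ts)"

text \<open>Substitution of terms for the free variables (capture is excluded by the side
condition freefor in the deduction rules).\<close>

primrec subst :: "('f, 'r, 'd) fm \<Rightarrow> (nat \<Rightarrow> 'f trm) \<Rightarrow> ('f, 'r, 'd) fm" where
  "subst (Rel r ts) \<sigma> = Rel r (map (substt \<sigma>) ts)"
| "subst (Eq s t) \<sigma> = Eq (substt \<sigma> s) (substt \<sigma> t)"
| "subst Top \<sigma> = Top"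
| "subst (Conj \<phi> \<psi>) \<sigma> = Conj (subst \<phi> \<sigma>) (subst \<psi> \<sigma>)"
| "subst (Disj I F) \<sigma> = Disj I (\<lambda>i. subst (F i) \<sigma>)"
| "subst (Exi v \<phi>) \<sigma> = Exi v (subst \<phi> (\<sigma>(v := Var v)))"

primrec freefor :: "('f, 'r, 'd) fm \<Rightarrow> (nat \<Rightarrow> 'f trm) \<Rightarrow> bool" where
  "freefor (Rel r ts) \<sigma> = True"
| "freefor (Eq s t) \<sigma> = True"
| "freefor Top \<sigma> = True"
| "freefor (Conj \<phi> \<psi>) \<sigma> = (freefor \<phi> \<sigma> \<and> freefor \<psi> \<sigma>)"
| "freefor (Disj I F) \<sigma> = (\<forall>i\<in>I. freefor (F i) \<sigma>)"
| "freefor (Exi v \<phi>) \<sigma> =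
     ((\<forall>u\<in>FV \<phi> - {v}. v \<notin> FVt (\<sigma> u)) \<and> freefor \<phi> (\<sigma>(v := Var v)))"

fun exs :: "nat list \<Rightarrow> ('f, 'r, 'd) fm \<Rightarrow> ('f, 'r, 'd) fm" where
  "exs [] \<phi> = \<phi>"
| "exs (y # ys) \<phi> = Exi y (exs ys \<phi>)"

fun eqs :: "(nat \<times> nat) list \<Rightarrow> ('f, 'r, 'd) fm" where
  "eqs [] = Top"
| "eqs ((u, w) # ps) = Conj (Eq (Var u) (Var w)) (eqs ps)"

definition ren :: "nat list \<Rightarrow> nat list \<Rightarrow> nat \<Rightarrow> 'f trm" where
  "ren u w v = (case map_of (zip u w) v of Some w' \<Rightarrow> Var w' | None \<Rightarrow> Var v)"

text \<open>A sequent  phi |-_x psi  is represented by (x, phi, psi).\<close>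
definition seq_ok :: "('f \<Rightarrow> nat) \<Rightarrow> ('r \<Rightarrow> nat) \<Rightarrow> nat list \<Rightarrow> ('f, 'r, 'd) fm \<Rightarrow> ('f, 'r, 'd) fm \<Rightarrow> bool" where
  "seq_ok af ar x \<phi> \<psi> \<longleftrightarrow> distinct x \<and> wff af ar \<phi> \<and> wff af ar \<psi> \<and> FV \<phi> \<subseteq> set x \<and> FV \<psi> \<subseteq> set x"

definition geometric_theory ::
  "('f \<Rightarrow> nat) \<Rightarrow> ('r \<Rightarrow> nat) \<Rightarrow> (nat list \<times> ('f, 'r, 'd) fm \<times> ('f, 'r, 'd) fm) set \<Rightarrow> bool" where
  "geometric_theory af ar T \<longleftrightarrow> (\<forall>(x, \<phi>, \<psi>) \<in> T. seq_ok af ar x \<phi> \<psi>)"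

section \<open>Deduction system of geometric logic (Johnstone, Elephant D1.3.1)\<close>

inductive prv :: "('f \<Rightarrow> nat) \<Rightarrow> ('r \<Rightarrow> nat) \<Rightarrow> (nat list \<times> ('f, 'r, 'd) fm \<times> ('f, 'r, 'd) fm) set
    \<Rightarrow> nat list \<Rightarrow> ('f, 'r, 'd) fm \<Rightarrow> ('f, 'r, 'd) fm \<Rightarrow> bool"
  for af ar T where
  axiom: "(x, \<phi>, \<psi>) \<in> T \<Longrightarrow> seq_ok af ar x \<phi> \<psi> \<Longrightarrow> prv af ar T x \<phi> \<psi>"
| ident: "seq_ok af ar x \<phi> \<phi> \<Longrightarrow> prv af ar T x \<phi> \<phi>"
| cut: "prv af ar T x \<phi> \<psi> \<Longrightarrow> prv af ar T x \<psi> \<chi> \<Longrightarrow> prv af ar T x \<phi> \<chi>"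
| substitution: "prv af ar T x \<phi> \<psi> \<Longrightarrow> distinct y \<Longrightarrow>
     (\<forall>v\<in>set x. wft af (\<sigma> v) \<and> FVt (\<sigma> v) \<subseteq> set y) \<Longrightarrow> freefor \<phi> \<sigma> \<Longrightarrow> freefor \<psi> \<sigma> \<Longrightarrow>
     prv af ar T y (subst \<phi> \<sigma>) (subst \<psi> \<sigma>)"
| eq_refl: "distinct x \<Longrightarrow> v \<in> set x \<Longrightarrow> prv af ar T x Top (Eq (Var v) (Var v))"
| eq_subst: "distinct u \<Longrightarrow> length u = length w \<Longrightarrow> freefor \<phi> (ren u w) \<Longrightarrow>
     seq_ok af ar z (Conj (eqs (zip u w)) \<phi>) (subst \<phi> (ren u w)) \<Longrightarrow>
     prv af ar T z (Conj (eqs (zip u w)) \<phi>) (subst \<phi> (ren u w))"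
| top_intro: "seq_ok af ar x \<phi> Top \<Longrightarrow> prv af ar T x \<phi> Top"
| conj_elim1: "seq_ok af ar x (Conj \<phi> \<psi>) \<phi> \<Longrightarrow> prv af ar T x (Conj \<phi> \<psi>) \<phi>"
| conj_elim2: "seq_ok af ar x (Conj \<phi> \<psi>) \<psi> \<Longrightarrow> prv af ar T x (Conj \<phi> \<psi>) \<psi>"
| conj_intro: "prv af ar T x \<phi> \<psi> \<Longrightarrow> prv af ar T x \<phi> \<chi> \<Longrightarrow> prv af ar T x \<phi> (Conj \<psi> \<chi>)"
| disj_intro: "i \<in> I \<Longrightarrow> seq_ok af ar x (F i) (Disj I F) \<Longrightarrow> prv af ar T x (F i) (Disj I F)"
| disj_elim: "(\<forall>i\<in>I. prv af ar T x (F i) \<psi>) \<Longrightarrow> seq_ok af ar x (Disj I F) \<psi> \<Longrightarrow>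
     prv af ar T x (Disj I F) \<psi>"
| ex_elim: "prv af ar T (x @ [y]) \<phi> \<psi> \<Longrightarrow> y \<notin> set x \<Longrightarrow> seq_ok af ar x (Exi y \<phi>) \<psi> \<Longrightarrow>
     prv af ar T x (Exi y \<phi>) \<psi>"
| ex_intro: "prv af ar T x (Exi y \<phi>) \<psi> \<Longrightarrow> y \<notin> set x \<Longrightarrow> prv af ar T (x @ [y]) \<phi> \<psi>"
| distributive: "seq_ok af ar x (Conj \<phi> (Disj I F)) (Disj I (\<lambda>i. Conj \<phi> (F i))) \<Longrightarrow>
     prv af ar T x (Conj \<phi> (Disj I F)) (Disj I (\<lambda>i. Conj \<phi> (F i)))"
| frobenius: "y \<notin> set x \<Longrightarrow> seq_ok af ar x (Conj \<phi> (Exi y \<psi>)) (Exi y (Conj \<phi> \<psi>)) \<Longrightarrow>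
     prv af ar T x (Conj \<phi> (Exi y \<psi>)) (Exi y (Conj \<phi> \<psi>))"

text \<open>An element [a] of such a structure is an equivalence class, i.e. a subset of S;
the carrier is a partition of a subset of S.  Operations are normalised outside
their domain so that structures are determined by their data.\<close>

record ('f, 'r, 's) str =
  carr :: "'s set set"
  fn :: "'f \<Rightarrow> 's set list \<Rightarrow> 's set"
  rl :: "'r \<Rightarrow> 's set list \<Rightarrow> bool"

definition is_str :: "('f \<Rightarrow> nat) \<Rightarrow> ('r \<Rightarrow> nat) \<Rightarrow> 's set \<Rightarrow> ('f, 'r, 's) str \<Rightarrow> bool" where
  "is_str af ar S M \<longleftrightarrow>
     (\<forall>c\<in>carr M. c \<noteq> {} \<and> c \<subseteq> S) \<and> pairwise disjnt (carr M) \<and>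
     (\<forall>f xs. if length xs = af f \<and> set xs \<subseteq> carr M then fn M f xs \<in> carr M else fn M f xs = {}) \<and>
     (\<forall>r xs. rl M r xs \<longrightarrow> length xs = ar r \<and> set xs \<subseteq> carr M)"

primrec evalt :: "('f, 'r, 's) str \<Rightarrow> (nat \<Rightarrow> 's set) \<Rightarrow> 'f trm \<Rightarrow> 's set" where
  "evalt M \<rho> (Var v) = \<rho> v"
| "evalt M \<rho> (Fun f ts) = fn M f (map (evalt M \<rho>) ts)"

primrec sat :: "('f, 'r, 's) str \<Rightarrow> (nat \<Rightarrow> 's set) \<Rightarrow> ('f, 'r, 'd) fm \<Rightarrow> bool" where
  "sat M \<rho> (Rel r ts) = rl M r (map (evalt M \<rho>) ts)"
| "sat M \<rho> (Eq s t) = (evalt M \<rho> s = evalt M \<rho> t)"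
| "sat M \<rho> Top = True"
| "sat M \<rho> (Conj \<phi> \<psi>) = (sat M \<rho> \<phi> \<and> sat M \<rho> \<psi>)"
| "sat M \<rho> (Disj I F) = (\<exists>i\<in>I. sat M \<rho> (F i))"
| "sat M \<rho> (Exi v \<phi>) = (\<exists>a\<in>carr M. sat M (\<rho>(v := a)) \<phi>)"

definition val :: "nat list \<Rightarrow> 's set list \<Rightarrow> nat \<Rightarrow> 's set" where
  "val x as v = (case map_of (zip x as) v of Some a \<Rightarrow> a | None \<Rightarrow> {})"

definition interp :: "('f, 'r, 's) str \<Rightarrow> nat list \<Rightarrow> ('f, 'r, 'd) fm \<Rightarrow> 's set list set" where
  "interp M x \<phi> = {as. length as = length x \<and> set as \<subseteq> carr M \<and> sat M (val x as) \<phi>}"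

definition valid_in :: "('f, 'r, 's) str \<Rightarrow> nat list \<Rightarrow> ('f, 'r, 'd) fm \<Rightarrow> ('f, 'r, 'd) fm \<Rightarrow> bool" where
  "valid_in M x \<phi> \<psi> \<longleftrightarrow> interp M x \<phi> \<subseteq> interp M x \<psi>"

definition MT :: "('f \<Rightarrow> nat) \<Rightarrow> ('r \<Rightarrow> nat) \<Rightarrow> 's set
    \<Rightarrow> (nat list \<times> ('f, 'r, 'd) fm \<times> ('f, 'r, 'd) fm) set \<Rightarrow> ('f, 'r, 's) str set" where
  "MT af ar S T = {M. is_str af ar S M \<and> (\<forall>(x, \<phi>, \<psi>) \<in> T. valid_in M x \<phi> \<psi>)}"

definition enough_models :: "('f \<Rightarrow> nat) \<Rightarrow> ('r \<Rightarrow> nat) \<Rightarrow> 's set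
    \<Rightarrow> (nat list \<times> ('f, 'r, 'd) fm \<times> ('f, 'r, 'd) fm) set \<Rightarrow> bool" where
  "enough_models af ar S T \<longleftrightarrow>
     (\<forall>x \<phi> \<psi>. seq_ok af ar x \<phi> \<psi> \<longrightarrow> (\<forall>M\<in>MT af ar S T. valid_in M x \<phi> \<psi>) \<longrightarrow> prv af ar T x \<phi> \<psi>)"

text \<open>[a]: the class of a in M (meaningful when a lies in the union of the carrier).\<close>
definition cls :: "('f, 'r, 's) str \<Rightarrow> 's \<Rightarrow> 's set" where
  "cls M a = (THE c. c \<in> carr M \<and> a \<in> c)"

definition inM :: "('f, 'r, 's) str \<Rightarrow> 's \<Rightarrow> bool" where
  "inM M a \<longleftrightarrow> a \<in> \<Union>(carr M)"

section \<open>The topological groupoid I_T \<rightrightarrows> M_T\<close>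

definition MT_subbasis :: "('f \<Rightarrow> nat) \<Rightarrow> ('r \<Rightarrow> nat) \<Rightarrow> 's set
    \<Rightarrow> (nat list \<times> ('f, 'r, 'd) fm \<times> ('f, 'r, 'd) fm) set \<Rightarrow> ('f, 'r, 's) str set set" where
  "MT_subbasis af ar S T =
     {{M \<in> MT af ar S T. inM M a} | a. a \<in> S}
   \<union> {{M \<in> MT af ar S T. (\<forall>a\<in>set as. inM M a) \<and> rl M r (map (cls M) as)} | r as. set as \<subseteq> S}
   \<union> {{M \<in> MT af ar S T. inM M a \<and> inM M b \<and> cls M a = cls M b} | a b. a \<in> S \<and> b \<in> S}
   \<union> {{M \<in> MT af ar S T. (\<forall>a\<in>set as. inM M a) \<and> inM M b \<and> fn M f (map (cls M) as) = cls M b}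
        | f as b. set as \<subseteq> S \<and> b \<in> S}"

definition coarsest_top :: "'a set \<Rightarrow> 'a set set \<Rightarrow> 'a topology" where
  "coarsest_top X B = topology_generated_by (insert X {U \<inter> X | U. U \<in> B})"

definition MT_top :: "('f \<Rightarrow> nat) \<Rightarrow> ('r \<Rightarrow> nat) \<Rightarrow> 's set
    \<Rightarrow> (nat list \<times> ('f, 'r, 'd) fm \<times> ('f, 'r, 'd) fm) set \<Rightarrow> ('f, 'r, 's) str topology" where
  "MT_top af ar S T = coarsest_top (MT af ar S T) (MT_subbasis af ar S T)"

text \<open>An isomorphism f : M \<rightarrow> N is represented by the triple (M, N, h); h is normalised
to {} outside the carrier of M.\<close>
type_synonym ('f, 'r, 's) iso = "('f, 'r, 's) str \<times> ('f, 'r, 's) str \<times> ('s set \<Rightarrow> 's set)"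

definition IT :: "('f \<Rightarrow> nat) \<Rightarrow> ('r \<Rightarrow> nat) \<Rightarrow> 's set
    \<Rightarrow> (nat list \<times> ('f, 'r, 'd) fm \<times> ('f, 'r, 'd) fm) set \<Rightarrow> ('f, 'r, 's) iso set" where
  "IT af ar S T = {(M, N, h). M \<in> MT af ar S T \<and> N \<in> MT af ar S T \<and>
      bij_betw h (carr M) (carr N) \<and> (\<forall>c. c \<notin> carr M \<longrightarrow> h c = {}) \<and>
      (\<forall>f xs. length xs = af f \<and> set xs \<subseteq> carr M \<longrightarrow> h (fn M f xs) = fn N f (map h xs)) \<and>
      (\<forall>r xs. length xs = ar r \<and> set xs \<subseteq> carr M \<longrightarrow> (rl N r (map h xs) \<longleftrightarrow> rl M r xs))}"

definition isod :: "('f, 'r, 's) iso \<Rightarrow> ('f, 'r, 's) str" where "isod i = fst i"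
definition isoc :: "('f, 'r, 's) iso \<Rightarrow> ('f, 'r, 's) str" where "isoc i = fst (snd i)"
definition isofun :: "('f, 'r, 's) iso \<Rightarrow> 's set \<Rightarrow> 's set" where "isofun i = snd (snd i)"

definition IT_top :: "('f \<Rightarrow> nat) \<Rightarrow> ('r \<Rightarrow> nat) \<Rightarrow> 's set
    \<Rightarrow> (nat list \<times> ('f, 'r, 'd) fm \<times> ('f, 'r, 'd) fm) set \<Rightarrow> ('f, 'r, 's) iso topology" where
  "IT_top af ar S T = coarsest_top (IT af ar S T)
     ({{i \<in> IT af ar S T. isod i \<in> U} | U. openin (MT_top af ar S T) U}
    \<union> {{i \<in> IT af ar S T. isoc i \<in> U} | U. openin (MT_top af ar S T) U}
    \<union> {{i \<in> IT af ar S T. inM (isod i) a \<and> inM (isoc i) b \<and> isofun i (cls (isod i) a) = cls (isoc i) b}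
        | a b. a \<in> S \<and> b \<in> S})"

section \<open>The equivariant sheaf M{x | phi}\<close>

definition extn :: "('f \<Rightarrow> nat) \<Rightarrow> ('r \<Rightarrow> nat) \<Rightarrow> 's set
    \<Rightarrow> (nat list \<times> ('f, 'r, 'd) fm \<times> ('f, 'r, 'd) fm) set
    \<Rightarrow> nat list \<Rightarrow> ('f, 'r, 'd) fm \<Rightarrow> (('f, 'r, 's) str \<times> 's set list) set" where
  "extn af ar S T x \<phi> = {(M, as). M \<in> MT af ar S T \<and> as \<in> interp M x \<phi>}"

definition ext_top :: "('f \<Rightarrow> nat) \<Rightarrow> ('r \<Rightarrow> nat) \<Rightarrow> 's set
    \<Rightarrow> (nat list \<times> ('f, 'r, 'd) fm \<times> ('f, 'r, 'd) fm) set
    \<Rightarrow> nat list \<Rightarrow> ('f, 'r, 'd) fm \<Rightarrow> (('f, 'r, 's) str \<times> 's set list) topology" where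
  "ext_top af ar S T x \<phi> = coarsest_top (extn af ar S T x \<phi>)
     ({{e \<in> extn af ar S T x \<phi>. fst e \<in> U} | U. openin (MT_top af ar S T) U}
    \<union> {{(M, map (cls M) as) | M. M \<in> MT af ar S T \<and> (\<forall>a\<in>set as. inM M a) \<and>
           map (cls M) as \<in> interp M x \<phi>} | as. set as \<subseteq> S})"

definition act :: "('f, 'r, 's) iso \<Rightarrow> ('f, 'r, 's) str \<times> 's set list \<Rightarrow> ('f, 'r, 's) str \<times> 's set list" where
  "act i e = (isoc i, map (isofun i) (snd e))"

definition eqsh_mor :: "('f \<Rightarrow> nat) \<Rightarrow> ('r \<Rightarrow> nat) \<Rightarrow> 's set
    \<Rightarrow> (nat list \<times> ('f, 'r, 'd) fm \<times> ('f, 'r, 'd) fm) set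
    \<Rightarrow> nat list \<Rightarrow> ('f, 'r, 'd) fm \<Rightarrow> nat list \<Rightarrow> ('f, 'r, 'd) fm
    \<Rightarrow> (('f, 'r, 's) str \<times> 's set list \<Rightarrow> ('f, 'r, 's) str \<times> 's set list) \<Rightarrow> bool" where
  "eqsh_mor af ar S T x \<phi> y \<psi> g \<longleftrightarrow>
     continuous_map (ext_top af ar S T x \<phi>) (ext_top af ar S T y \<psi>) g \<and>
     (\<forall>e\<in>extn af ar S T x \<phi>. fst (g e) = fst e) \<and>
     (\<forall>i\<in>IT af ar S T. \<forall>e\<in>extn af ar S T x \<phi>. fst e = isod i \<longrightarrow> g (act i e) = act i (g e))"

text \<open>theta (in context x @ y, x and y disjoint) is T-provably functional from
{x | phi} to {y | psi} (Johnstone D1.4.1).\<close>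
definition prov_functional :: "('f \<Rightarrow> nat) \<Rightarrow> ('r \<Rightarrow> nat)
    \<Rightarrow> (nat list \<times> ('f, 'r, 'd) fm \<times> ('f, 'r, 'd) fm) set
    \<Rightarrow> nat list \<Rightarrow> ('f, 'r, 'd) fm \<Rightarrow> nat list \<Rightarrow> ('f, 'r, 'd) fm \<Rightarrow> ('f, 'r, 'd) fm \<Rightarrow> bool" where
  "prov_functional af ar T x \<phi> y \<psi> \<theta> \<longleftrightarrow>
     wff af ar \<theta> \<and> FV \<theta> \<subseteq> set (x @ y) \<and>
     prv af ar T (x @ y) \<theta> (Conj \<phi> \<psi>) \<and>
     prv af ar T x \<phi> (exs y \<theta>) \<and>
     (\<exists>z. length z = length y \<and> distinct z \<and> set z \<inter> set (x @ y) = {} \<and>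
          freefor \<theta> (ren y z) \<and>
          prv af ar T (x @ y @ z) (Conj \<theta> (subst \<theta> (ren y z))) (eqs (zip y z)))"

definition induced_map :: "nat list \<Rightarrow> nat list \<Rightarrow> ('f, 'r, 'd) fm
    \<Rightarrow> ('f, 'r, 's) str \<times> 's set list \<Rightarrow> ('f, 'r, 's) str \<times> 's set list" where
  "induced_map x y \<theta> e = (fst e, THE bs. snd e @ bs \<in> interp (fst e) (x @ y) \<theta>)"

end

theory Submission
  imports Defs
begin


definition updl :: "(nat \<Rightarrow> 's set) \<Rightarrow> nat list \<Rightarrow> 's set list \<Rightarrow> nat \<Rightarrow> 's set" where
  "updl \<rho> ws ds v = (case map_of (zip ws ds) v of Some d \<Rightarrow> d | None \<Rightarrow> \<rho> v)"

lemma val_updl: "val x as = updl (\<lambda>_. {}) x as"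
  by (auto simp: val_def updl_def fun_eq_iff split: option.splits)

lemma updl_Cons: "updl \<rho> (w # ws) (d # ds) = (updl \<rho> ws ds)(w := d)"
  by (auto simp: updl_def fun_eq_iff)

lemma updl_nth: "distinct ws \<Longrightarrow> length ws = length ds \<Longrightarrow> i < length ws \<Longrightarrow> updl \<rho> ws ds (ws ! i) = ds ! i"
  by (simp add: updl_def map_of_zip_nth)

lemma updl_notin: "v \<notin> set ws \<Longrightarrow> updl \<rho> ws ds v = \<rho> v"
proof -
  assume "v \<notin> set ws"
  then have "map_of (zip ws ds) v = None"
    by (auto simp: map_of_eq_None_iff dest: set_zip_leftD)
  then show ?thesis by (simp add: updl_def)
qed

lemma updl_upd: "w \<notin> set ws \<Longrightarrow> updl (\<rho>(w := a)) ws ds = (updl \<rho> ws ds)(w := a)"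
proof (rule ext)
  fix v assume w: "w \<notin> set ws"
  show "updl (\<rho>(w := a)) ws ds v = ((updl \<rho> ws ds)(w := a)) v"
  proof (cases "v = w")
    case True then show ?thesis using updl_notin[OF w, of "\<rho>(w := a)" ds] by simp
  next
    case False then show ?thesis by (simp add: updl_def split: option.splits)
  qed
qed

lemma evalt_cong: "(\<forall>v\<in>FVt t. \<rho> v = \<rho>' v) \<Longrightarrow> evalt M \<rho> t = evalt M \<rho>' t"
proof (induction t)
  case (Var v) then show ?case by simp
next
  case (Fun f ts)
  then have "map (evalt M \<rho>) ts = map (evalt M \<rho>') ts" by auto
  then show ?case by (metis evalt.simps(2))
qed

lemma sat_cong: "(\<forall>v\<in>FV \<phi>. \<rho> v = \<rho>' v) \<Longrightarrow> sat M \<rho> \<phi> = sat M \<rho>' \<phi>"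
proof (induction \<phi> arbitrary: \<rho> \<rho>')
  case (Rel r ts)
  then have "map (evalt M \<rho>) ts = map (evalt M \<rho>') ts" by (auto intro!: evalt_cong)
  then show ?case by (metis sat.simps(1))
next
  case (Eq s t)
  then show ?case using evalt_cong[of s \<rho> \<rho>' M] evalt_cong[of t \<rho> \<rho>' M] by auto
next
  case Top then show ?case by simp
next
  case (Conj \<phi>1 \<phi>2)
  have "sat M \<rho> \<phi>1 = sat M \<rho>' \<phi>1" using Conj.prems by (intro Conj.IH(1)) auto
  moreover have "sat M \<rho> \<phi>2 = sat M \<rho>' \<phi>2" using Conj.prems by (intro Conj.IH(2)) auto
  ultimately show ?case by simp
next
  case (Disj I F)
  then show ?case by simp (metis UN_I rangeI)
next
  case (Exi v \<phi>)
  have "\<And>a. sat M (\<rho>(v := a)) \<phi> = sat M (\<rho>'(v := a)) \<phi>"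
    using Exi by (intro Exi.IH) auto
  then show ?case by simp
qed

lemma evalt_subst: "evalt M \<rho> (substt \<sigma> t) = evalt M (\<lambda>v. evalt M \<rho> (\<sigma> v)) t"
proof (induction t)
  case (Fun f ts)
  then have "map (evalt M \<rho> \<circ> substt \<sigma>) ts = map (evalt M (\<lambda>v. evalt M \<rho> (\<sigma> v))) ts" by auto
  then show ?case by (simp del: map_eq_conv)
qed simp

lemma FVt_substt: "FVt (substt \<sigma> t) = (\<Union>u\<in>FVt t. FVt (\<sigma> u))"
  by (induction t) auto

lemma wft_substt: "wft af t \<Longrightarrow> (\<forall>v. wft af (\<sigma> v)) \<Longrightarrow> wft af (substt \<sigma> t)"
  by (induction t) (auto simp: list_all_iff)

lemma sat_subst: "freefor \<phi> \<sigma> \<Longrightarrow> sat M \<rho> (subst \<phi> \<sigma>) = sat M (\<lambda>v. evalt M \<rho> (\<sigma> v)) \<phi>"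
proof (induction \<phi> arbitrary: \<sigma> \<rho>)
  case (Rel r ts) then show ?case by (simp add: evalt_subst comp_def)
next
  case (Eq s t) then show ?case by (simp add: evalt_subst)
next
  case Top then show ?case by simp
next
  case (Conj \<phi>1 \<phi>2) then show ?case by auto
next
  case (Disj I F) then show ?case by auto
next
  case (Exi v \<phi>)
  have "\<And>a. sat M (\<rho>(v := a)) (subst \<phi> (\<sigma>(v := Var v))) = sat M ((\<lambda>u. evalt M \<rho> (\<sigma> u))(v := a)) \<phi>"
  proof -
    fix a
    have "sat M (\<rho>(v := a)) (subst \<phi> (\<sigma>(v := Var v))) = sat M (\<lambda>u. evalt M (\<rho>(v := a)) ((\<sigma>(v := Var v)) u)) \<phi>"
      using Exi.prems by (intro Exi.IH) (simp add: fun_upd_def)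
    also have "\<dots> = sat M ((\<lambda>u. evalt M \<rho> (\<sigma> u))(v := a)) \<phi>"
    proof (rule sat_cong, intro ballI)
      fix u assume u: "u \<in> FV \<phi>"
      show "evalt M (\<rho>(v := a)) ((\<sigma>(v := Var v)) u) = ((\<lambda>u. evalt M \<rho> (\<sigma> u))(v := a)) u"
      proof (cases "u = v")
        case True then show ?thesis by simp
      next
        case False
        then have "v \<notin> FVt (\<sigma> u)" using Exi.prems u by auto
        then have "evalt M (\<rho>(v := a)) (\<sigma> u) = evalt M \<rho> (\<sigma> u)" by (intro evalt_cong) auto
        then show ?thesis using False by simp
      qed
    qed
    finally show "sat M (\<rho>(v := a)) (subst \<phi> (\<sigma>(v := Var v))) = sat M ((\<lambda>u. evalt M \<rho> (\<sigma> u))(v := a)) \<phi>" .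
  qed
  then show ?case by simp
qed

lemma FV_subst: "FV (subst \<phi> \<sigma>) \<subseteq> (\<Union>u\<in>FV \<phi>. FVt (\<sigma> u))"
proof (induction \<phi> arbitrary: \<sigma>)
  case (Exi v \<phi>)
  show ?case
  proof
    fix w assume "w \<in> FV (subst (Exi v \<phi>) \<sigma>)"
    then have w: "w \<in> FV (subst \<phi> (\<sigma>(v := Var v)))" "w \<noteq> v" by auto
    then obtain u where "u \<in> FV \<phi>" "w \<in> FVt ((\<sigma>(v := Var v)) u)" using Exi.IH by blast
    then show "w \<in> (\<Union>u\<in>FV (Exi v \<phi>). FVt (\<sigma> u))" using w by (auto split: if_splits)
  qed
next
  case (Conj a b)
  have "FV (subst (Conj a b) \<sigma>) = FV (subst a \<sigma>) \<union> FV (subst b \<sigma>)" by simp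
  also have "\<dots> \<subseteq> (\<Union>u\<in>FV a. FVt (\<sigma> u)) \<union> (\<Union>u\<in>FV b. FVt (\<sigma> u))"
    using Conj.IH(1)[of \<sigma>] Conj.IH(2)[of \<sigma>] by (rule Un_mono)
  also have "\<dots> = (\<Union>u\<in>FV (Conj a b). FVt (\<sigma> u))" by simp
  finally show ?case .
next
  case (Disj I F)
  show ?case
  proof
    fix w assume "w \<in> FV (subst (Disj I F) \<sigma>)"
    then obtain i where "i \<in> I" "w \<in> FV (subst (F i) \<sigma>)" by auto
    moreover obtain u where "u \<in> FV (F i)" "w \<in> FVt (\<sigma> u)" using Disj.IH[of "F i" \<sigma>] \<open>w \<in> FV (subst (F i) \<sigma>)\<close> by blast
    ultimately show "w \<in> (\<Union>u\<in>FV (Disj I F). FVt (\<sigma> u))" by auto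
  qed
qed (auto simp: FVt_substt)

lemma wff_subst: "wff af ar \<phi> \<Longrightarrow> (\<forall>v. wft af (\<sigma> v)) \<Longrightarrow> wff af ar (subst \<phi> \<sigma>)"
  by (induction \<phi> arbitrary: \<sigma>) (auto intro: wft_substt)

lemma sat_exs: "distinct ws \<Longrightarrow> sat M \<rho> (exs ws B) \<longleftrightarrow> (\<exists>ds. length ds = length ws \<and> set ds \<subseteq> carr M \<and> sat M (updl \<rho> ws ds) B)"
proof (induction ws arbitrary: \<rho>)
  case Nil then show ?case by (simp add: updl_def)
next
  case (Cons w ws)
  show ?case
  proof
    assume "sat M \<rho> (exs (w # ws) B)"
    then obtain a where a: "a \<in> carr M" "sat M (\<rho>(w := a)) (exs ws B)" by auto
    have "distinct ws" using Cons.prems by simp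
    then have "\<exists>ds. length ds = length ws \<and> set ds \<subseteq> carr M \<and> sat M (updl (\<rho>(w := a)) ws ds) B"
      using Cons.IH[of "\<rho>(w := a)"] a(2) by blast
    then obtain ds where "length ds = length ws" "set ds \<subseteq> carr M"
      "sat M (updl (\<rho>(w := a)) ws ds) B" by blast
    note a this
    moreover have "updl (\<rho>(w := a)) ws ds = updl \<rho> (w # ws) (a # ds)"
      using Cons.prems by (simp add: updl_upd updl_Cons)
    ultimately show "\<exists>ds. length ds = length (w # ws) \<and> set ds \<subseteq> carr M \<and> sat M (updl \<rho> (w # ws) ds) B"
      by (intro exI[of _ "a # ds"]) auto
  next
    assume "\<exists>ds. length ds = length (w # ws) \<and> set ds \<subseteq> carr M \<and> sat M (updl \<rho> (w # ws) ds) B"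
    then obtain ds0 where ds0: "length ds0 = Suc (length ws)" "set ds0 \<subseteq> carr M"
      "sat M (updl \<rho> (w # ws) ds0) B" by auto
    then obtain a ds where ads: "ds0 = a # ds" by (cases ds0) auto
    have w: "w \<notin> set ws" "distinct ws" using Cons.prems by auto
    have "sat M (updl (\<rho>(w := a)) ws ds) B"
      using ds0(3) unfolding ads updl_Cons updl_upd[OF w(1)] .
    moreover have "length ds = length ws" "set ds \<subseteq> carr M" "a \<in> carr M" using ds0 ads by auto
    ultimately have "sat M (\<rho>(w := a)) (exs ws B)" using Cons.IH[of "\<rho>(w := a)"] w(2) by blast
    then show "sat M \<rho> (exs (w # ws) B)" using \<open>a \<in> carr M\<close> by auto
  qed
qed

lemma FV_exs: "FV (exs ws B) = FV B - set ws"
  by (induction ws) auto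

lemma wff_exs: "wff af ar (exs ws B) = wff af ar B"
  by (induction ws) auto

fun conjl :: "('f, 'r, 'd) fm list \<Rightarrow> ('f, 'r, 'd) fm" where
  "conjl [] = Top"
| "conjl (a # l) = Conj a (conjl l)"

lemma sat_conjl: "sat M \<rho> (conjl l) \<longleftrightarrow> (\<forall>a\<in>set l. sat M \<rho> a)"
  by (induction l) auto
lemma FV_conjl: "FV (conjl l) = (\<Union>a\<in>set l. FV a)"
  by (induction l) auto
lemma wff_conjl: "wff af ar (conjl l) \<longleftrightarrow> (\<forall>a\<in>set l. wff af ar a)"
  by (induction l) auto
lemma freefor_conjl: "freefor (conjl l) \<sigma> \<longleftrightarrow> (\<forall>a\<in>set l. freefor a \<sigma>)"
  by (induction l) auto

lemma sat_eqs: "sat M \<rho> (eqs ps) \<longleftrightarrow> (\<forall>(u, w)\<in>set ps. \<rho> u = \<rho> w)"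
  by (induction ps rule: eqs.induct) auto
lemma FV_eqs: "FV (eqs ps) = fst ` set ps \<union> snd ` set ps"
  by (induction ps rule: eqs.induct) auto
lemma wff_eqs: "wff af ar (eqs ps)"
  by (induction ps rule: eqs.induct) auto

lemma freefor_id: "(\<forall>u\<in>FV \<phi>. \<sigma> u = Var u) \<Longrightarrow> freefor \<phi> \<sigma>"
  by (induction \<phi> arbitrary: \<sigma>) auto

lemma freefor_exs: "(\<forall>w\<in>set ws. \<forall>u. u \<noteq> w \<longrightarrow> w \<notin> FVt (\<sigma> u)) \<Longrightarrow> (\<forall>\<sigma>. freefor B \<sigma>) \<Longrightarrow> freefor (exs ws B) \<sigma>"
proof (induction ws arbitrary: \<sigma>)
  case Nil then show ?case by simp
next
  case (Cons w ws)
  have "freefor (exs ws B) (\<sigma>(w := Var w))"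
    using Cons.prems by (intro Cons.IH) auto
  then show ?case using Cons.prems by auto
qed



definition isoP :: "('f \<Rightarrow> nat) \<Rightarrow> ('r \<Rightarrow> nat) \<Rightarrow> ('f, 'r, 's) str \<Rightarrow> ('f, 'r, 's) str \<Rightarrow> ('s set \<Rightarrow> 's set) \<Rightarrow> bool" where
  "isoP af ar M N h \<longleftrightarrow> bij_betw h (carr M) (carr N) \<and> (\<forall>c. c \<notin> carr M \<longrightarrow> h c = {}) \<and>
      (\<forall>f xs. length xs = af f \<and> set xs \<subseteq> carr M \<longrightarrow> h (fn M f xs) = fn N f (map h xs)) \<and>
      (\<forall>r xs. length xs = ar r \<and> set xs \<subseteq> carr M \<longrightarrow> (rl N r (map h xs) \<longleftrightarrow> rl M r xs))"

lemma IT_iff: "(M, N, h) \<in> IT af ar S T \<longleftrightarrow> M \<in> MT af ar S T \<and> N \<in> MT af ar S T \<and> isoP af ar M N h"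
  by (simp add: IT_def isoP_def)

lemma str_empty: "is_str af ar S M \<Longrightarrow> {} \<notin> carr M"
  by (auto simp: is_str_def)

lemma iso_empty: "is_str af ar S M \<Longrightarrow> isoP af ar M N h \<Longrightarrow> h {} = {}"
  by (auto simp: isoP_def dest: str_empty)

lemma iso_set_carr:
  assumes "is_str af ar S M" "is_str af ar S N" "isoP af ar M N h" "set xs \<subseteq> insert {} (carr M)"
  shows "set (map h xs) \<subseteq> carr N \<longleftrightarrow> set xs \<subseteq> carr M"
proof
  assume a: "set (map h xs) \<subseteq> carr N"
  show "set xs \<subseteq> carr M"
  proof
    fix c assume c: "c \<in> set xs"
    show "c \<in> carr M"
    proof (rule ccontr)
      assume "c \<notin> carr M"
      then have "c = {}" using c assms(4) by auto
      then have "h c = {}" using iso_empty[OF assms(1,3)] by simp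
      moreover have "h c \<in> carr N" using a c by auto
      ultimately show False using str_empty[OF assms(2)] by simp
    qed
  qed
next
  assume "set xs \<subseteq> carr M"
  then show "set (map h xs) \<subseteq> carr N" using assms(3) by (auto simp: isoP_def bij_betw_def)
qed

lemma iso_inj:
  assumes "is_str af ar S M" "is_str af ar S N" "isoP af ar M N h"
  shows "inj_on h (insert {} (carr M))"
proof -
  have "inj_on h (carr M)" using assms(3) by (auto simp: isoP_def bij_betw_def)
  moreover have "h {} \<notin> h ` carr M"
    using iso_empty[OF assms(1,3)] str_empty[OF assms(2)] assms(3) by (auto simp: isoP_def bij_betw_def)
  ultimately show ?thesis using str_empty[OF assms(1)] by (simp add: inj_on_insert)
qed

lemma evalt_iso:
  assumes "is_str af ar S M" "is_str af ar S N" "isoP af ar M N h" "\<forall>v. \<rho> v \<in> insert {} (carr M)"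
  shows "evalt M \<rho> t \<in> insert {} (carr M) \<and> evalt N (\<lambda>v. h (\<rho> v)) t = h (evalt M \<rho> t)"
proof (induction t)
  case (Var v) then show ?case using assms(4) by simp
next
  case (Fun f ts)
  define xs where "xs = map (evalt M \<rho>) ts"
  have xs: "set xs \<subseteq> insert {} (carr M)" using Fun by (auto simp: xs_def)
  have m: "map (evalt N (\<lambda>v. h (\<rho> v))) ts = map h xs" using Fun by (auto simp: xs_def)
  show ?case
  proof (cases "length xs = af f \<and> set xs \<subseteq> carr M")
    case True
    then have "fn M f xs \<in> carr M" using assms(1) unfolding is_str_def by metis
    moreover have "h (fn M f xs) = fn N f (map h xs)" using True assms(3) by (auto simp: isoP_def)
    ultimately show ?thesis using m by (simp add: xs_def[symmetric])
  next
    case False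
    then have "fn M f xs = {}" using assms(1) unfolding is_str_def by metis
    moreover have "\<not> (length (map h xs) = af f \<and> set (map h xs) \<subseteq> carr N)"
      using False iso_set_carr[OF assms(1-3) xs] by simp
    then have "fn N f (map h xs) = {}" using assms(2) unfolding is_str_def by metis
    ultimately show ?thesis using m iso_empty[OF assms(1,3)] by (simp add: xs_def[symmetric])
  qed
qed

lemma sat_iso:
  assumes "is_str af ar S M" "is_str af ar S N" "isoP af ar M N h"
  shows "\<forall>v. \<rho> v \<in> insert {} (carr M) \<Longrightarrow> sat N (\<lambda>v. h (\<rho> v)) \<phi> = sat M \<rho> \<phi>"
proof (induction \<phi> arbitrary: \<rho>)
  case (Rel r ts)
  define xs where "xs = map (evalt M \<rho>) ts"
  have xs: "set xs \<subseteq> insert {} (carr M)" using evalt_iso[OF assms Rel] by (auto simp: xs_def)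
  have m: "map (evalt N (\<lambda>v. h (\<rho> v))) ts = map h xs" using evalt_iso[OF assms Rel] by (auto simp: xs_def)
  have "rl N r (map h xs) = rl M r xs"
  proof (cases "length xs = ar r \<and> set xs \<subseteq> carr M")
    case True then show ?thesis using assms(3) by (auto simp: isoP_def)
  next
    case False
    then have "\<not> rl M r xs" using assms(1) unfolding is_str_def by metis
    moreover have "\<not> (length (map h xs) = ar r \<and> set (map h xs) \<subseteq> carr N)"
      using False iso_set_carr[OF assms(1-3) xs] by simp
    then have "\<not> rl N r (map h xs)" using assms(2) unfolding is_str_def by metis
    ultimately show ?thesis by simp
  qed
  then show ?case using m by (metis sat.simps(1) xs_def)
next
  case (Eq s t)
  have "evalt N (\<lambda>v. h (\<rho> v)) s = h (evalt M \<rho> s)" "evalt N (\<lambda>v. h (\<rho> v)) t = h (evalt M \<rho> t)"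
    "evalt M \<rho> s \<in> insert {} (carr M)" "evalt M \<rho> t \<in> insert {} (carr M)"
    using evalt_iso[OF assms Eq] by auto
  moreover have "h (evalt M \<rho> s) = h (evalt M \<rho> t) \<longleftrightarrow> evalt M \<rho> s = evalt M \<rho> t"
    using inj_on_eq_iff[OF iso_inj[OF assms] calculation(3) calculation(4)] .
  ultimately show ?case by simp
next
  case Top then show ?case by simp
next
  case (Conj a b) then show ?case by simp
next
  case (Disj I F) then show ?case by simp
next
  case (Exi v \<phi>)
  have bij: "bij_betw h (carr M) (carr N)" using assms(3) by (simp add: isoP_def)
  have cN: "carr N = h ` carr M" using bij by (simp add: bij_betw_def)
  have "(\<exists>a\<in>carr N. sat N ((\<lambda>v. h (\<rho> v))(v := a)) \<phi>) = (\<exists>b\<in>carr M. sat N ((\<lambda>v. h (\<rho> v))(v := h b)) \<phi>)"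
    unfolding cN by blast
  also have "\<dots> = (\<exists>b\<in>carr M. sat M (\<rho>(v := b)) \<phi>)"
  proof (intro bex_cong refl)
    fix b assume b: "b \<in> carr M"
    have "(\<lambda>v. h (\<rho> v))(v := h b) = (\<lambda>u. h ((\<rho>(v := b)) u))" by (auto simp: fun_eq_iff)
    moreover have "\<forall>u. (\<rho>(v := b)) u \<in> insert {} (carr M)" using Exi.prems b by auto
    moreover have "sat N (\<lambda>u. h ((\<rho>(v := b)) u)) \<phi> = sat M (\<rho>(v := b)) \<phi>"
      by (rule Exi.IH) (use calculation(2) in blast)
    ultimately show "sat N ((\<lambda>v. h (\<rho> v))(v := h b)) \<phi> = sat M (\<rho>(v := b)) \<phi>" by simp
  qed
  finally show ?case by simp
qed

lemma val_map: "h {} = {} \<Longrightarrow> val x (map h as) = (\<lambda>v. h (val x as v))"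
  by (auto simp: val_def fun_eq_iff zip_map2 map_of_map split: option.splits)

lemma val_range: "set as \<subseteq> carr M \<Longrightarrow> \<forall>v. val x as v \<in> insert {} (carr M)"
  by (auto simp: val_def split: option.splits dest!: map_of_SomeD set_zip_rightD)

lemma interp_iso:
  assumes "is_str af ar S M" "is_str af ar S N" "isoP af ar M N h"
  shows "interp N x \<phi> = map h ` interp M x \<phi>"
proof
  have h0: "h {} = {}" using iso_empty[OF assms(1,3)] .
  have bij: "bij_betw h (carr M) (carr N)" using assms(3) by (simp add: isoP_def)
  show "map h ` interp M x \<phi> \<subseteq> interp N x \<phi>"
  proof
    fix bs assume "bs \<in> map h ` interp M x \<phi>"
    then obtain as where as: "as \<in> interp M x \<phi>" "bs = map h as" by auto
    have s1: "sat M (val x as) \<phi>" "set as \<subseteq> carr M" using as(1) by (auto simp: interp_def)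
    have "sat N (val x bs) \<phi>"
      unfolding as(2) val_map[where h=h, OF h0] by (subst sat_iso[OF assms val_range[OF s1(2), of x]]) (rule s1(1))
    then show "bs \<in> interp N x \<phi>" using as bij by (auto simp: interp_def bij_betw_def)
  qed
  show "interp N x \<phi> \<subseteq> map h ` interp M x \<phi>"
  proof
    fix bs assume bs: "bs \<in> interp N x \<phi>"
    define as where "as = map (inv_into (carr M) h) bs"
    have as1: "set as \<subseteq> carr M" using bs bij by (auto simp: as_def interp_def bij_betw_def inv_into_into)
    have "\<forall>b\<in>set bs. h (inv_into (carr M) h b) = b"
    proof
      fix b assume "b \<in> set bs"
      then have "b \<in> h ` carr M" using bs bij by (auto simp: interp_def bij_betw_def)
      then show "h (inv_into (carr M) h b) = b" by (rule f_inv_into_f)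
    qed
    then have as2: "bs = map h as" unfolding as_def by (simp add: map_idI)
    have "sat N (val x bs) \<phi>" using bs by (simp add: interp_def)
    then have "sat N (\<lambda>v. h (val x as v)) \<phi>" unfolding as2 val_map[where h=h, OF h0] .
    then have "sat M (val x as) \<phi>" by (rule iffD1[OF sat_iso[OF assms val_range[OF as1, of x]]])
    then have "as \<in> interp M x \<phi>" using as1 as2 bs by (auto simp: interp_def)
    then show "bs \<in> map h ` interp M x \<phi>" using as2 by auto
  qed
qed

lemma MT_iso:
  assumes "M \<in> MT af ar S T" "is_str af ar S N" "isoP af ar M N h"
  shows "N \<in> MT af ar S T"
proof -
  have M: "is_str af ar S M" using assms(1) by (simp add: MT_def)
  have "valid_in N x \<phi> \<psi>" if "(x, \<phi>, \<psi>) \<in> T" for x \<phi> \<psi>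
  proof -
    have "interp M x \<phi> \<subseteq> interp M x \<psi>" using assms(1) that unfolding MT_def valid_in_def by auto
    then show ?thesis unfolding valid_in_def interp_iso[OF M assms(2,3)] by (rule image_mono)
  qed
  then show ?thesis using assms(2) by (auto simp: MT_def)
qed

lemma exists_shift:
  assumes "infinite S" "finite R"
  shows "\<exists>\<pi>. bij_betw \<pi> S (S - R)"
  using assms(2)
proof (induction R rule: finite_induct)
  case empty
  have "bij_betw id S (S - {})" by (simp add: bij_betw_id)
  then show ?case by blast
next
  case (insert r R)
  then obtain \<pi> where \<pi>: "bij_betw \<pi> S (S - R)" by blast
  have "infinite (S - R)" using assms(1) insert.hyps(1) by (simp add: Diff_infinite_finite)
  then have "\<exists>\<tau>. bij_betw \<tau> (S - R) (S - R - {r})" by (rule infinite_imp_bij_betw)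
  then obtain \<tau> where "bij_betw \<tau> (S - R) (S - R - {r})" by (elim exE)
  then have "bij_betw (\<tau> \<circ> \<pi>) S (S - R - {r})" by (rule bij_betw_trans[OF \<pi>])
  moreover have "S - R - {r} = S - insert r R" by blast
  ultimately have "bij_betw (\<tau> \<circ> \<pi>) S (S - insert r R)" by simp
  then show ?case by blast
qed

lemma cls_eq:
  assumes "is_str af ar S M" "K \<in> carr M" "a \<in> K"
  shows "cls M a = K"
  unfolding cls_def
proof (rule the_equality)
  show "K \<in> carr M \<and> a \<in> K" using assms by simp
  fix c assume c: "c \<in> carr M \<and> a \<in> c"
  have "pairwise disjnt (carr M)" using assms(1) by (simp add: is_str_def)
  then show "c = K" using c assms(2,3) unfolding pairwise_def disjnt_def by blast
qed

lemma cls_in: "is_str af ar S M \<Longrightarrow> inM M a \<Longrightarrow> cls M a \<in> carr M \<and> a \<in> cls M a"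
proof -
  assume a: "is_str af ar S M" "inM M a"
  then obtain K where "K \<in> carr M" "a \<in> K" by (auto simp: inM_def)
  then show ?thesis using cls_eq[OF a(1)] by simp
qed



lemma construct:
  assumes N: "is_str af ar S N" and inf: "infinite S" and fin: "finite R" and RS: "R \<subseteq> S"
    and D: "\<forall>c\<in>R. D c \<in> carr N"
  shows "\<exists>N' \<Phi>. is_str af ar S N' \<and> isoP af ar N N' \<Phi> \<and> (\<forall>c\<in>R. c \<in> \<Phi> (D c))"
proof -
  obtain \<pi> where \<pi>: "bij_betw \<pi> S (S - R)" using exists_shift[OF inf fin] by blast
  have \<pi>inj: "inj_on \<pi> S" and \<pi>img: "\<pi> ` S \<subseteq> S - R" using \<pi> by (auto simp: bij_betw_def)
  have Ksub: "K \<noteq> {} \<and> K \<subseteq> S" if "K \<in> carr N" for K using N that by (auto simp: is_str_def)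
  have Kdisj: "K \<inter> K' = {}" if "K \<in> carr N" "K' \<in> carr N" "K \<noteq> K'" for K K'
    using N that by (auto simp: is_str_def pairwise_def disjnt_def)
  define \<Phi> where "\<Phi> K = (if K \<in> carr N then \<pi> ` K \<union> {c\<in>R. D c = K} else {})" for K
  define C where "C = \<Phi> ` carr N"
  define \<Phi>i where "\<Phi>i = inv_into (carr N) \<Phi>"
  have \<Phi>S: "\<Phi> K \<noteq> {} \<and> \<Phi> K \<subseteq> S" if "K \<in> carr N" for K
    using Ksub[OF that] \<pi>img RS that by (auto simp: \<Phi>_def)
  have \<Phi>disj: "\<Phi> K \<inter> \<Phi> K' = {}" if "K \<in> carr N" "K' \<in> carr N" "K \<noteq> K'" for K K'
  proof -
    have "\<pi> ` K \<inter> \<pi> ` K' = \<pi> ` (K \<inter> K')"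
      using inj_on_image_Int[OF \<pi>inj] Ksub that by metis
    then have 1: "\<pi> ` K \<inter> \<pi> ` K' = {}" using Kdisj[OF that] by simp
    have 2: "\<pi> ` K \<inter> R = {}" "\<pi> ` K' \<inter> R = {}" using \<pi>img Ksub that by blast+
    show ?thesis using 1 2 that by (auto simp: \<Phi>_def)
  qed
  have \<Phi>inj: "inj_on \<Phi> (carr N)"
  proof (rule inj_onI, rule ccontr)
    fix K K' assume a: "K \<in> carr N" "K' \<in> carr N" "\<Phi> K = \<Phi> K'" "K \<noteq> K'"
    then show False using \<Phi>disj[OF a(1,2,4)] \<Phi>S[OF a(1)] by simp
  qed
  have \<Phi>i: "\<Phi>i (\<Phi> K) = K" if "K \<in> carr N" for K
    using \<Phi>inj that by (simp add: \<Phi>i_def)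
  have \<Phi>iC: "\<Phi>i c \<in> carr N" if "c \<in> C" for c
    using that by (auto simp: \<Phi>i_def C_def inv_into_into)
  have \<Phi>\<Phi>i: "\<Phi> (\<Phi>i c) = c" if "c \<in> C" for c
    using that by (auto simp: \<Phi>i_def C_def f_inv_into_f)
  define N' where "N' = \<lparr>carr = C,
     fn = (\<lambda>f xs. if length xs = af f \<and> set xs \<subseteq> C then \<Phi> (fn N f (map \<Phi>i xs)) else {}),
     rl = (\<lambda>r xs. length xs = ar r \<and> set xs \<subseteq> C \<and> rl N r (map \<Phi>i xs))\<rparr>"
  have str: "is_str af ar S N'"
    unfolding is_str_def
  proof (intro conjI allI)
    show "\<forall>c\<in>carr N'. c \<noteq> {} \<and> c \<subseteq> S" using \<Phi>S by (auto simp: N'_def C_def)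
    show "pairwise disjnt (carr N')"
      unfolding N'_def C_def pairwise_def disjnt_def using \<Phi>disj by auto
    fix f xs
    show "if length xs = af f \<and> set xs \<subseteq> carr N' then fn N' f xs \<in> carr N' else fn N' f xs = {}"
    proof (cases "length xs = af f \<and> set xs \<subseteq> C")
      case True
      then have "length (map \<Phi>i xs) = af f \<and> set (map \<Phi>i xs) \<subseteq> carr N" using \<Phi>iC by auto
      then have "fn N f (map \<Phi>i xs) \<in> carr N" using N unfolding is_str_def by metis
      then show ?thesis using True by (simp add: N'_def C_def)
    next
      case False then show ?thesis by (auto simp: N'_def)
    qed
  next
    fix r xs
    show "rl N' r xs \<longrightarrow> length xs = ar r \<and> set xs \<subseteq> carr N'" by (simp add: N'_def)
  qed
  have mapi: "map \<Phi>i (map \<Phi> xs) = xs" if "set xs \<subseteq> carr N" for xs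
    using that \<Phi>i by (induction xs) auto
  have mapC: "set (map \<Phi> xs) \<subseteq> C" if "set xs \<subseteq> carr N" for xs
    using that by (auto simp: C_def)
  have iso: "isoP af ar N N' \<Phi>"
    unfolding isoP_def
  proof (intro conjI allI impI)
    show "bij_betw \<Phi> (carr N) (carr N')" using \<Phi>inj by (simp add: bij_betw_def N'_def C_def)
    fix c show "c \<notin> carr N \<Longrightarrow> \<Phi> c = {}" by (simp add: \<Phi>_def)
  next
    fix f xs assume a: "length xs = af f \<and> set xs \<subseteq> carr N"
    then show "\<Phi> (fn N f xs) = fn N' f (map \<Phi> xs)" using mapi[of xs] mapC[of xs] by (simp add: N'_def)
  next
    fix r xs assume a: "length xs = ar r \<and> set xs \<subseteq> carr N"
    then show "rl N' r (map \<Phi> xs) = rl N r xs" using mapi[of xs] mapC[of xs] by (simp add: N'_def)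
  qed
  have "\<forall>c\<in>R. c \<in> \<Phi> (D c)" using D by (auto simp: \<Phi>_def)
  then show ?thesis using str iso by blast
qed



datatype ('f, 'r, 's) fact = FIn 's | FRel 'r "'s list" | FEq 's 's | FFn 'f "'s list" 's

fun felems :: "('f, 'r, 's) fact \<Rightarrow> 's set" where
  "felems (FIn a) = {a}"
| "felems (FRel r as) = set as"
| "felems (FEq a b) = {a, b}"
| "felems (FFn f as b) = insert b (set as)"

fun holdsF :: "('f, 'r, 's) str \<Rightarrow> ('f, 'r, 's) fact \<Rightarrow> bool" where
  "holdsF M (FIn a) = inM M a"
| "holdsF M (FRel r as) = ((\<forall>a\<in>set as. inM M a) \<and> rl M r (map (cls M) as))"
| "holdsF M (FEq a b) = (inM M a \<and> inM M b \<and> cls M a = cls M b)"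
| "holdsF M (FFn f as b) = ((\<forall>a\<in>set as. inM M a) \<and> inM M b \<and> fn M f (map (cls M) as) = cls M b)"

lemma holdsF_inM: "holdsF M fa \<Longrightarrow> a \<in> felems fa \<Longrightarrow> inM M a"
  by (cases fa) auto

definition goodF :: "'s set \<Rightarrow> ('f, 'r, 's) fact list \<Rightarrow> bool" where
  "goodF S Fs \<longleftrightarrow> (\<forall>fa\<in>set Fs. felems fa \<subseteq> S)"

definition holdsL :: "('f, 'r, 's) str \<Rightarrow> ('f, 'r, 's) fact list \<Rightarrow> bool" where
  "holdsL M Fs \<longleftrightarrow> (\<forall>fa\<in>set Fs. holdsF M fa)"

lemma subbasis_fact:
  assumes "V \<in> MT_subbasis af ar S T"
  shows "\<exists>fa. felems fa \<subseteq> S \<and> V = {M \<in> MT af ar S T. holdsF M fa}"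
proof -
  from assms consider (1) a where "V = {M \<in> MT af ar S T. inM M a}" "a \<in> S"
    | (2) r as where "V = {M \<in> MT af ar S T. (\<forall>a\<in>set as. inM M a) \<and> rl M r (map (cls M) as)}" "set as \<subseteq> S"
    | (3) a b where "V = {M \<in> MT af ar S T. inM M a \<and> inM M b \<and> cls M a = cls M b}" "a \<in> S" "b \<in> S"
    | (4) f as b where "V = {M \<in> MT af ar S T. (\<forall>a\<in>set as. inM M a) \<and> inM M b \<and> fn M f (map (cls M) as) = cls M b}"
       "set as \<subseteq> S" "b \<in> S"
    unfolding MT_subbasis_def by blast
  then show ?thesis
  proof cases
    case 1 then show ?thesis by (intro exI[of _ "FIn a"]) auto
  next
    case 2 then show ?thesis by (intro exI[of _ "FRel r as"]) auto
  next
    case 3 then show ?thesis by (intro exI[of _ "FEq a b"]) auto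
  next
    case 4 then show ?thesis by (intro exI[of _ "FFn f as b"]) auto
  qed
qed

lemma MT_open_nbhd:
  assumes "openin (MT_top af ar S T) U" "M \<in> U"
  shows "\<exists>Fs. goodF S Fs \<and> holdsL M Fs \<and> {N \<in> MT af ar S T. holdsL N Fs} \<subseteq> U"
proof -
  let ?X = "MT af ar S T"
  have "generate_topology_on (insert ?X {V \<inter> ?X | V. V \<in> MT_subbasis af ar S T}) U"
    using assms(1) by (simp add: MT_top_def coarsest_top_def openin_topology_generated_by_iff)
  then have "\<forall>M\<in>U. \<exists>Fs. goodF S Fs \<and> holdsL M Fs \<and> {N \<in> ?X. holdsL N Fs} \<subseteq> U"
  proof (induction rule: generate_topology_on.induct)
    case Empty then show ?case by simp
  next
    case (Int a b)
    show ?case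
    proof
      fix M assume "M \<in> a \<inter> b"
      then obtain Fs1 Fs2 where "goodF S Fs1" "holdsL M Fs1" "{N \<in> ?X. holdsL N Fs1} \<subseteq> a"
        "goodF S Fs2" "holdsL M Fs2" "{N \<in> ?X. holdsL N Fs2} \<subseteq> b" using Int.IH by blast
      then show "\<exists>Fs. goodF S Fs \<and> holdsL M Fs \<and> {N \<in> ?X. holdsL N Fs} \<subseteq> a \<inter> b"
        by (intro exI[of _ "Fs1 @ Fs2"]) (auto simp: goodF_def holdsL_def)
    qed
  next
    case (UN K)
    show ?case
    proof
      fix M assume "M \<in> \<Union>K"
      then obtain k where "k \<in> K" "M \<in> k" by blast
      then show "\<exists>Fs. goodF S Fs \<and> holdsL M Fs \<and> {N \<in> ?X. holdsL N Fs} \<subseteq> \<Union>K"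
        using UN.IH by blast
    qed
  next
    case (Basis s)
    then show ?case
    proof (elim insertE CollectE exE conjE)
      assume "s = ?X"
      then show ?thesis by (intro ballI exI[of _ "[]"]) (auto simp: goodF_def holdsL_def)
    next
      fix V assume s: "s = V \<inter> ?X" "V \<in> MT_subbasis af ar S T"
      then obtain fa where "felems fa \<subseteq> S" "V = {M \<in> ?X. holdsF M fa}" using subbasis_fact by blast
      then show ?thesis using s by (intro ballI exI[of _ "[fa]"]) (auto simp: goodF_def holdsL_def)
    qed
  qed
  then show ?thesis using assms(2) by blast
qed

definition nb :: "('f \<Rightarrow> nat) \<Rightarrow> ('r \<Rightarrow> nat) \<Rightarrow> 's set
    \<Rightarrow> (nat list \<times> ('f, 'r, 'd) fm \<times> ('f, 'r, 'd) fm) set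
    \<Rightarrow> nat list \<Rightarrow> ('f, 'r, 'd) fm \<Rightarrow> ('f, 'r, 's) fact list \<Rightarrow> 's list \<Rightarrow> (('f, 'r, 's) str \<times> 's set list) set" where
  "nb af ar S T x \<phi> Fs a0 = {e \<in> extn af ar S T x \<phi>. holdsL (fst e) Fs \<and> (\<forall>a\<in>set a0. inM (fst e) a) \<and>
      snd e = map (cls (fst e)) a0}"

lemma reps:
  assumes "M \<in> MT af ar S T" "set as \<subseteq> carr M"
  shows "\<exists>a0. set a0 \<subseteq> S \<and> (\<forall>a\<in>set a0. inM M a) \<and> as = map (cls M) a0"
proof -
  have str: "is_str af ar S M" using assms(1) by (simp add: MT_def)
  define a0 where "a0 = map (\<lambda>K. SOME a. a \<in> K) as"
  have cl: "K \<noteq> {} \<and> K \<subseteq> S" if "K \<in> carr M" for K using str that by (simp add: is_str_def)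
  have "(SOME a. a \<in> K) \<in> K" if "K \<in> carr M" for K
    using cl[OF that] by (simp add: some_in_eq)
  then have 1: "\<forall>i<length as. a0 ! i \<in> as ! i \<and> as ! i \<in> carr M"
    using assms(2) by (auto simp: a0_def dest!: nth_mem)
  have "set a0 \<subseteq> S" using 1 cl by (fastforce simp: in_set_conv_nth a0_def)
  moreover have "\<forall>a\<in>set a0. inM M a"
  proof
    fix a assume "a \<in> set a0"
    then obtain i where i: "i < length as" "a = a0 ! i" by (auto simp: a0_def in_set_conv_nth)
    then have "a \<in> as ! i" "as ! i \<in> carr M" using 1 by auto
    then show "inM M a" by (auto simp: inM_def)
  qed
  moreover have "as = map (cls M) a0"
  proof (rule nth_equalityI)
    show "length as = length (map (cls M) a0)" by (simp add: a0_def)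
    fix i assume "i < length as"
    then have "a0 ! i \<in> as ! i" "as ! i \<in> carr M" using 1 by auto
    then show "as ! i = map (cls M) a0 ! i" using cls_eq[OF str] \<open>i < length as\<close> by (simp add: a0_def)
  qed
  ultimately show ?thesis by blast
qed

lemma ext_open_nbhd:
  assumes "openin (ext_top af ar S T x \<phi>) Op" "p \<in> Op"
  shows "\<exists>Fs a0. goodF S Fs \<and> set a0 \<subseteq> S \<and> p \<in> nb af ar S T x \<phi> Fs a0 \<and> nb af ar S T x \<phi> Fs a0 \<subseteq> Op"
proof -
  let ?X = "extn af ar S T x \<phi>"
  let ?B = "{{e \<in> ?X. fst e \<in> U} | U. openin (MT_top af ar S T) U}
    \<union> {{(M, map (cls M) as) | M. M \<in> MT af ar S T \<and> (\<forall>a\<in>set as. inM M a) \<and>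
           map (cls M) as \<in> interp M x \<phi>} | as. set as \<subseteq> S}"
  let ?P = "\<lambda>Op p. \<exists>Fs a0. goodF S Fs \<and> set a0 \<subseteq> S \<and> p \<in> nb af ar S T x \<phi> Fs a0 \<and> nb af ar S T x \<phi> Fs a0 \<subseteq> Op"
  have base: "\<exists>a0. set a0 \<subseteq> S \<and> p \<in> nb af ar S T x \<phi> [] a0" if pX: "p \<in> ?X" for p
  proof -
    obtain M as where p: "p = (M, as)" "M \<in> MT af ar S T" "as \<in> interp M x \<phi>"
      using pX by (cases p) (auto simp: extn_def)
    then obtain a0 where "set a0 \<subseteq> S \<and> (\<forall>a\<in>set a0. inM M a) \<and> as = map (cls M) a0"
      using reps[of M af ar S T as] by (auto simp: interp_def)
    then show ?thesis using pX p by (auto simp: nb_def holdsL_def)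
  qed
  have "generate_topology_on (insert ?X {U \<inter> ?X | U. U \<in> ?B}) Op"
    using assms(1) by (simp add: ext_top_def coarsest_top_def openin_topology_generated_by_iff)
  then have "\<forall>p\<in>Op. ?P Op p"
  proof (induction rule: generate_topology_on.induct)
    case Empty then show ?case by simp
  next
    case (Int a b)
    show ?case
    proof
      fix p assume "p \<in> a \<inter> b"
      then have pa: "p \<in> a" and pb: "p \<in> b" by auto
      obtain Fs1 a1 where 1: "goodF S Fs1" "set a1 \<subseteq> S" "p \<in> nb af ar S T x \<phi> Fs1 a1"
          "nb af ar S T x \<phi> Fs1 a1 \<subseteq> a"
        using Int.IH(1) pa by blast
      obtain Fs2 a2 where 2: "goodF S Fs2" "set a2 \<subseteq> S" "p \<in> nb af ar S T x \<phi> Fs2 a2" "nb af ar S T x \<phi> Fs2 a2 \<subseteq> b"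
        using Int.IH(2) pb by blast
      have cl: "map (cls (fst p)) a1 = map (cls (fst p)) a2" using 1(3) 2(3) by (auto simp: nb_def)
      then have len: "length a1 = length a2" by (metis length_map)
      define Fs where "Fs = Fs1 @ Fs2 @ map (\<lambda>q. FEq (fst q) (snd q)) (zip a1 a2)"
      have z: "felems (FEq u w) \<subseteq> S" if "(u, w) \<in> set (zip a1 a2)" for u w
        using set_zip_leftD[OF that] set_zip_rightD[OF that] 1(2) 2(2) by auto
      have g: "goodF S Fs" using 1(1) 2(1) z unfolding Fs_def goodF_def by auto
      have "p \<in> nb af ar S T x \<phi> Fs a1"
      proof -
        have "holdsF (fst p) (FEq u w)" if uw: "(u, w) \<in> set (zip a1 a2)" for u w
        proof -
          obtain i where i: "i < length a1" "u = a1 ! i" "w = a2 ! i"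
            using uw len by (auto simp: set_zip)
          have "cls (fst p) u = cls (fst p) w" using cl i len by (metis nth_map)
          moreover have "inM (fst p) u" "inM (fst p) w" using 1(3) 2(3) i len by (auto simp: nb_def)
          ultimately show ?thesis by simp
        qed
        then show ?thesis using 1(3) 2(3) by (auto simp: nb_def holdsL_def Fs_def)
      qed
      moreover have "nb af ar S T x \<phi> Fs a1 \<subseteq> a \<inter> b"
      proof
        fix e assume e: "e \<in> nb af ar S T x \<phi> Fs a1"
        have "e \<in> nb af ar S T x \<phi> Fs1 a1" using e by (auto simp: nb_def holdsL_def Fs_def)
        moreover have "e \<in> nb af ar S T x \<phi> Fs2 a2"
        proof -
          have h: "holdsF (fst e) (FEq u w)" if uw: "(u, w) \<in> set (zip a1 a2)" for u w
          proof -
            have "FEq u w \<in> set Fs" unfolding Fs_def set_append set_map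
              using uw by (intro UnI2 rev_image_eqI[of "(u, w)"]) auto
            then show ?thesis using e by (auto simp: nb_def holdsL_def)
          qed
          have "map (cls (fst e)) a1 = map (cls (fst e)) a2"
          proof (rule nth_equalityI)
            show "length (map (cls (fst e)) a1) = length (map (cls (fst e)) a2)" using len by simp
            fix i assume "i < length (map (cls (fst e)) a1)"
            then have "(a1 ! i, a2 ! i) \<in> set (zip a1 a2)" using len by (auto simp: set_zip)
            then show "map (cls (fst e)) a1 ! i = map (cls (fst e)) a2 ! i"
              using h[of "a1 ! i" "a2 ! i"] \<open>i < _\<close> len by simp
          qed
          moreover have "\<forall>a\<in>set a2. inM (fst e) a"
          proof
            fix a assume "a \<in> set a2"
            then obtain i where "i < length a2" "a = a2 ! i" by (auto simp: in_set_conv_nth)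
            then have "(a1 ! i, a) \<in> set (zip a1 a2)" using len by (auto simp: set_zip)
            then show "inM (fst e) a" using h by fastforce
          qed
          ultimately show ?thesis using e by (auto simp: nb_def holdsL_def Fs_def)
        qed
        ultimately show "e \<in> a \<inter> b" using 1(4) 2(4) by blast
      qed
      ultimately show "?P (a \<inter> b) p" using g 1(2) by blast
    qed
  next
    case (UN K)
    show ?case
    proof
      fix p assume "p \<in> \<Union>K"
      then obtain k where "k \<in> K" "p \<in> k" by blast
      then obtain Fs a0 where "goodF S Fs" "set a0 \<subseteq> S" "p \<in> nb af ar S T x \<phi> Fs a0" "nb af ar S T x \<phi> Fs a0 \<subseteq> k"
        using UN.IH by blast
      then show "?P (\<Union>K) p" using \<open>k \<in> K\<close> by blast
    qed
  next
    case (Basis s)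
    then show ?case
    proof (elim insertE CollectE exE conjE)
      assume s: "s = ?X"
      show ?thesis
      proof
        fix p assume "p \<in> s"
        then obtain a0 where "set a0 \<subseteq> S" "p \<in> nb af ar S T x \<phi> [] a0" using base s by blast
        moreover have "nb af ar S T x \<phi> [] a0 \<subseteq> s" using s by (auto simp: nb_def)
        ultimately show "?P s p" by (intro exI[of _ "[]"] exI[of _ a0]) (auto simp: goodF_def)
      qed
    next
      fix V assume s: "s = V \<inter> ?X" "V \<in> ?B"
      show ?thesis
      proof
        fix p assume p: "p \<in> s"
        from s(2) show "?P s p"
        proof (elim UnE CollectE exE conjE)
          fix U assume V: "V = {e \<in> ?X. fst e \<in> U}" "openin (MT_top af ar S T) U"
          obtain a0 where a0: "set a0 \<subseteq> S" "p \<in> nb af ar S T x \<phi> [] a0" using base p s by blast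
          have "fst p \<in> U" using p s V by auto
          then obtain Fs where Fs: "goodF S Fs" "holdsL (fst p) Fs" "{N \<in> MT af ar S T. holdsL N Fs} \<subseteq> U"
            using MT_open_nbhd[OF V(2)] by blast
          have "p \<in> nb af ar S T x \<phi> Fs a0" using a0(2) Fs(2) by (auto simp: nb_def)
          moreover have "nb af ar S T x \<phi> Fs a0 \<subseteq> s"
            using Fs(3) s(1) V(1) by (auto simp: nb_def extn_def)
          ultimately show ?thesis using Fs(1) a0(1) by blast
        next
          fix as assume V: "V = {(M, map (cls M) as) | M. M \<in> MT af ar S T \<and> (\<forall>a\<in>set as. inM M a) \<and>
           map (cls M) as \<in> interp M x \<phi>}" "set as \<subseteq> S"
          have "p \<in> nb af ar S T x \<phi> [] as" using p s V by (auto simp: nb_def holdsL_def extn_def)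
          moreover have "nb af ar S T x \<phi> [] as \<subseteq> s" using s V by (auto simp: nb_def extn_def)
          ultimately show ?thesis using V(2) by (intro exI[of _ "[]"] exI[of _ as]) (auto simp: goodF_def)
        qed
      qed
    qed
  qed
  then show ?thesis using assms(2) by blast
qed



lemma card_Un_le: "infinite B \<Longrightarrow> (card_of (X), card_of (B)) \<in> ordLeq \<Longrightarrow> (card_of (Y), card_of (B)) \<in> ordLeq \<Longrightarrow> (card_of (X \<union> Y), card_of (B)) \<in> ordLeq"
  using card_of_Un_ordLeq_infinite_Field[of "card_of B" X Y] by (simp add: Field_card_of card_of_card_order_on)

lemma card_Times_le: "infinite B \<Longrightarrow> (card_of (X), card_of (B)) \<in> ordLeq \<Longrightarrow> (card_of (Y), card_of (B)) \<in> ordLeq \<Longrightarrow> (card_of (X \<times> Y), card_of (B)) \<in> ordLeq"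
  using card_of_Sigma_ordLeq_infinite[of B X "\<lambda>_. Y"] by simp

lemma card_image_le: "(card_of (X), card_of (B)) \<in> ordLeq \<Longrightarrow> (card_of (f ` X), card_of (B)) \<in> ordLeq"
  using card_of_image ordLeq_transitive by blast

lemma card_refl_le: "(card_of (B), card_of (B)) \<in> ordLeq"
  by (simp add: card_of_Card_order ordLeq_refl)

lemma card_lists_le:
  assumes inf: "infinite B"
  shows "(card_of ({l. set l \<subseteq> B}), card_of (B)) \<in> ordLeq"
proof -
  define L where "L n = {l. length l = n \<and> set l \<subseteq> B}" for n
  have Ln: "(card_of (L n), card_of (B)) \<in> ordLeq" for n
  proof (induction n)
    case 0
    have "B \<noteq> {}" using inf by auto
    then have "(card_of ({[]::'a list}), card_of (B)) \<in> ordLeq" by (rule card_of_singl_ordLeq)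
    moreover have "L 0 = {[]}" by (auto simp: L_def)
    ultimately show ?case by simp
  next
    case (Suc n)
    have "L (Suc n) = (\<lambda>(a, l). a # l) ` (B \<times> L n)"
    proof
      show "L (Suc n) \<subseteq> (\<lambda>(a, l). a # l) ` (B \<times> L n)"
      proof
        fix l assume "l \<in> L (Suc n)"
        then obtain a l' where "l = a # l'" "a \<in> B" "l' \<in> L n" by (cases l) (auto simp: L_def)
        then show "l \<in> (\<lambda>(a, l). a # l) ` (B \<times> L n)" by force
      qed
      show "(\<lambda>(a, l). a # l) ` (B \<times> L n) \<subseteq> L (Suc n)" by (auto simp: L_def)
    qed
    moreover have "(card_of (B \<times> L n), card_of (B)) \<in> ordLeq" using card_Times_le[OF inf card_refl_le Suc.IH] .
    ultimately show ?case using card_image_le by metis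
  qed
  have "{l. set l \<subseteq> B} = (\<Union>n\<in>UNIV. L n)" by (auto simp: L_def)
  moreover have "(card_of (\<Union>n\<in>(UNIV::nat set). L n), card_of (B)) \<in> ordLeq"
    using card_of_UNION_ordLeq_infinite[OF inf] Ln inf infinite_iff_card_of_nat by blast
  ultimately show ?thesis by simp
qed

lemma card_facts_le:
  assumes inf: "infinite B" and f: "(card_of (UNIV :: 'f set), card_of (B)) \<in> ordLeq" and r: "(card_of (UNIV :: 'r set), card_of (B)) \<in> ordLeq"
  shows "(card_of ({fa :: ('f, 'r, 's) fact. felems fa \<subseteq> B}), card_of (B)) \<in> ordLeq"
proof -
  let ?L = "{l. set l \<subseteq> B}"
  have L: "(card_of (?L), card_of (B)) \<in> ordLeq" by (rule card_lists_le[OF inf])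
  have sub: "{fa :: ('f, 'r, 's) fact. felems fa \<subseteq> B} \<subseteq>
     (FIn ` B \<union> (\<lambda>(r, as). FRel r as) ` (UNIV \<times> ?L)) \<union>
     ((\<lambda>(a, b). FEq a b) ` (B \<times> B) \<union> (\<lambda>(f, as, b). FFn f as b) ` (UNIV \<times> (?L \<times> B)))"
  proof
    fix fa :: "('f, 'r, 's) fact" assume "fa \<in> {fa. felems fa \<subseteq> B}"
    then show "fa \<in> (FIn ` B \<union> (\<lambda>(r, as). FRel r as) ` (UNIV \<times> ?L)) \<union>
     ((\<lambda>(a, b). FEq a b) ` (B \<times> B) \<union> (\<lambda>(f, as, b). FFn f as b) ` (UNIV \<times> (?L \<times> B)))"
      by (cases fa) force+
  qed
  have 1: "(card_of (FIn ` B :: ('f, 'r, 's) fact set), card_of (B)) \<in> ordLeq" by (rule card_image_le[OF card_refl_le])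
  have 2: "(card_of ((\<lambda>(r, as). FRel r as) ` (UNIV \<times> ?L) :: ('f, 'r, 's) fact set), card_of B) \<in> ordLeq"
    by (rule card_image_le[OF card_Times_le[OF inf r L]])
  have 3: "(card_of ((\<lambda>(a, b). FEq a b) ` (B \<times> B) :: ('f, 'r, 's) fact set), card_of B) \<in> ordLeq"
    by (rule card_image_le[OF card_Times_le[OF inf card_refl_le card_refl_le]])
  have 4: "(card_of ((\<lambda>(f, as, b). FFn f as b) ` (UNIV \<times> (?L \<times> B)) :: ('f, 'r, 's) fact set), card_of B) \<in> ordLeq"
    by (rule card_image_le[OF card_Times_le[OF inf f card_Times_le[OF inf L card_refl_le]]])
  have "(card_of ((FIn ` B \<union> (\<lambda>(r, as). FRel r as) ` (UNIV \<times> ?L)) \<union>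
     ((\<lambda>(a, b). FEq a b) ` (B \<times> B) \<union> (\<lambda>(f, as, b). FFn f as b) ` (UNIV \<times> (?L \<times> B))) :: ('f, 'r, 's) fact set), card_of B) \<in> ordLeq"
    by (rule card_Un_le[OF inf card_Un_le[OF inf 1 2] card_Un_le[OF inf 3 4]])
  then show ?thesis using card_of_mono1[OF sub] ordLeq_transitive by blast
qed



fun pos :: "'a list \<Rightarrow> 'a \<Rightarrow> nat" where
  "pos [] c = 0"
| "pos (a # l) c = (if a = c then 0 else Suc (pos l c))"

lemma pos_nth: "c \<in> set l \<Longrightarrow> pos l c < length l \<and> l ! pos l c = c"
  by (induction l) auto

fun trF :: "('f \<Rightarrow> nat) \<Rightarrow> ('r \<Rightarrow> nat) \<Rightarrow> ('s \<Rightarrow> nat) \<Rightarrow> ('f, 'r, 's) fact \<Rightarrow> ('f, 'r, 'd) fm" where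
  "trF af ar \<nu> (FIn a) = Top"
| "trF af ar \<nu> (FRel r as) = (if length as = ar r then Rel r (map (\<lambda>a. Var (\<nu> a)) as) else Disj {} (\<lambda>_. Top))"
| "trF af ar \<nu> (FEq a b) = Eq (Var (\<nu> a)) (Var (\<nu> b))"
| "trF af ar \<nu> (FFn f as b) = (if length as = af f then Eq (Fun f (map (\<lambda>a. Var (\<nu> a)) as)) (Var (\<nu> b)) else Disj {} (\<lambda>_. Top))"

fun holdsD :: "('f \<Rightarrow> nat) \<Rightarrow> ('r \<Rightarrow> nat) \<Rightarrow> ('f, 'r, 's) str \<Rightarrow> ('s \<Rightarrow> 's set) \<Rightarrow> ('f, 'r, 's) fact \<Rightarrow> bool" where
  "holdsD af ar M E (FIn a) = True"
| "holdsD af ar M E (FRel r as) = (length as = ar r \<and> rl M r (map E as))"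
| "holdsD af ar M E (FEq a b) = (E a = E b)"
| "holdsD af ar M E (FFn f as b) = (length as = af f \<and> fn M f (map E as) = E b)"

lemma sat_trF: "sat M \<rho> (trF af ar \<nu> fa) = holdsD af ar M (\<lambda>a. \<rho> (\<nu> a)) fa"
  by (cases fa) (auto simp: comp_def)

lemma FV_trF: "FV (trF af ar \<nu> fa) \<subseteq> \<nu> ` felems fa"
  by (cases fa) auto

lemma wff_trF: "wff af ar (trF af ar \<nu> fa)"
  by (cases fa) (auto simp: list_all_iff)

lemma freefor_trF: "freefor (trF af ar \<nu> fa) \<sigma>"
  by (cases fa) auto

lemma holdsD_cong: "(\<forall>a\<in>felems fa. E a = E' a) \<Longrightarrow> holdsD af ar M E fa = holdsD af ar M E' fa"
proof (cases fa)
  case (FRel r as)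
  assume "\<forall>a\<in>felems fa. E a = E' a"
  then have "map E as = map E' as" using FRel by simp
  then show ?thesis using FRel by (metis holdsD.simps(2))
next
  case (FFn f as b)
  assume "\<forall>a\<in>felems fa. E a = E' a"
  then have "map E as = map E' as" "E b = E' b" using FFn by simp_all
  then show ?thesis using FFn by (metis holdsD.simps(4))
qed auto

lemma holdsF_D:
  assumes str: "is_str af ar S M" and h: "holdsF M fa"
  shows "holdsD af ar M (cls M) fa"
proof (cases fa)
  case (FRel r as)
  then have "rl M r (map (cls M) as)" using h by simp
  then have "length (map (cls M) as) = ar r" using str unfolding is_str_def by blast
  then show ?thesis using h FRel by simp
next
  case (FFn f as b)
  have "cls M b \<in> carr M" using h FFn cls_in[OF str] by auto
  then have "cls M b \<noteq> {}" using str_empty[OF str] by auto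
  then have "fn M f (map (cls M) as) \<noteq> {}" using h FFn by simp
  then have "length as = af f" using str unfolding is_str_def by (metis length_map)
  then show ?thesis using h FFn by simp
qed (use h in auto)

lemma holdsD_F:
  assumes "is_str af ar S N" "is_str af ar S N'" "isoP af ar N N' \<Phi>"
    and E: "\<forall>a\<in>felems fa. E a \<in> carr N \<and> inM N' a \<and> cls N' a = \<Phi> (E a)"
    and h: "holdsD af ar N E fa"
  shows "holdsF N' fa"
proof (cases fa)
  case (FIn a) then show ?thesis using E by simp
next
  case (FRel r as)
  have m: "map (cls N') as = map \<Phi> (map E as)" using E FRel by simp
  have "set (map E as) \<subseteq> carr N" using E FRel by auto
  moreover have rlp: "\<forall>r xs. length xs = ar r \<and> set xs \<subseteq> carr N \<longrightarrow> rl N' r (map \<Phi> xs) = rl N r xs"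
    using assms(3) by (simp add: isoP_def)
  ultimately have "rl N' r (map \<Phi> (map E as)) = rl N r (map E as)"
    by (intro rlp[rule_format]) (use h FRel in auto)
  then have "rl N' r (map \<Phi> (map E as))" using h FRel by simp
  then have "rl N' r (map (cls N') as)" unfolding m .
  then show ?thesis using FRel E by simp
next
  case (FEq a b) then show ?thesis using E h by simp
next
  case (FFn f as b)
  have m: "map (cls N') as = map \<Phi> (map E as)" using E FFn by simp
  have "set (map E as) \<subseteq> carr N" using E FFn by auto
  moreover have fnp: "\<forall>f xs. length xs = af f \<and> set xs \<subseteq> carr N \<longrightarrow> \<Phi> (fn N f xs) = fn N' f (map \<Phi> xs)"
    using assms(3) by (simp add: isoP_def)
  ultimately have "\<Phi> (fn N f (map E as)) = fn N' f (map \<Phi> (map E as))"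
    by (intro fnp[rule_format]) (use h FFn in auto)
  then have "fn N' f (map \<Phi> (map E as)) = \<Phi> (E b)" using h FFn by simp
  then have "fn N' f (map (cls N') as) = cls N' b" unfolding m using E FFn by simp
  then show ?thesis using FFn E by simp
qed

lemma val_app_x:
  assumes "distinct (x @ y)" "length as = length x" "length bs = length y" "i < length x"
  shows "val (x @ y) (as @ bs) (x ! i) = as ! i"
proof -
  have "map_of (zip (x @ y) (as @ bs)) ((x @ y) ! i) = Some ((as @ bs) ! i)"
    using assms by (intro map_of_zip_nth) auto
  then show ?thesis using assms by (simp add: val_def nth_append)
qed

lemma val_app_y:
  assumes "distinct (x @ y)" "length as = length x" "length bs = length y" "i < length y"
  shows "val (x @ y) (as @ bs) (y ! i) = bs ! i"
proof -
  have "map_of (zip (x @ y) (as @ bs)) ((x @ y) ! (length x + i)) = Some ((as @ bs) ! (length x + i))"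
    using assms by (intro map_of_zip_nth) auto
  then show ?thesis using assms by (simp add: val_def nth_append)
qed

lemma val_app_map:
  assumes "distinct (x @ y)" "length as = length x" "length bs = length y"
  shows "map (val (x @ y) (as @ bs)) x = as" "map (val (x @ y) (as @ bs)) y = bs"
  using val_app_x[OF assms] val_app_y[OF assms] assms(2,3) by (auto intro!: nth_equalityI)

lemma val_x:
  assumes "distinct x" "length as = length x" "i < length x"
  shows "val x as (x ! i) = as ! i"
  using assms by (simp add: val_def map_of_zip_nth)

lemma val_app_eq_x:
  assumes "distinct (x @ y)" "length as = length x" "length bs = length y" "v \<in> set x"
  shows "val (x @ y) (as @ bs) v = val x as v"
proof -
  obtain i where "i < length x" "v = x ! i" using assms(4) by (auto simp: in_set_conv_nth)
  then show ?thesis using val_app_x[OF assms(1-3)] val_x[of x as i] assms by simp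
qed

lemma val_app_eq_y:
  assumes "distinct (x @ y)" "length as = length x" "length bs = length y" "v \<in> set y"
  shows "val (x @ y) (as @ bs) v = val y bs v"
proof -
  obtain i where "i < length y" "v = y ! i" using assms(4) by (auto simp: in_set_conv_nth)
  then show ?thesis using val_app_y[OF assms(1-3)] val_x[of y bs i] assms by simp
qed

lemma sat_zipeq:
  assumes "length vs = length cs"
  shows "sat M \<rho> (conjl (map (\<lambda>(v, c). Eq (Var v) (Var (\<nu> c))) (zip vs cs))) \<longleftrightarrow>
    map \<rho> vs = map (\<lambda>c. \<rho> (\<nu> c)) cs"
  using assms
proof (induction vs arbitrary: cs)
  case Nil then show ?case by simp
next
  case (Cons v vs)
  then obtain c cs' where "cs = c # cs'" by (cases cs) auto
  then show ?case using Cons by auto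
qed

lemma FV_zipeq: "FV (conjl (map (\<lambda>(v, c). Eq (Var v) (Var (\<nu> c))) (zip vs cs))) \<subseteq> set vs \<union> \<nu> ` set cs"
proof
  fix u assume "u \<in> FV (conjl (map (\<lambda>(v, c). Eq (Var v) (Var (\<nu> c))) (zip vs cs)))"
  then obtain v c where "(v, c) \<in> set (zip vs cs)" "u = v \<or> u = \<nu> c" by (auto simp: FV_conjl)
  then show "u \<in> set vs \<union> \<nu> ` set cs" using set_zip_leftD set_zip_rightD by fastforce
qed

lemma wff_zipeq: "wff af ar (conjl (map (\<lambda>(v, c). Eq (Var v) (Var (\<nu> c))) (zip vs cs)))"
  by (auto simp: wff_conjl)

lemma freefor_zipeq: "freefor (conjl (map (\<lambda>(v, c). Eq (Var v) (Var (\<nu> c))) (zip vs cs))) \<sigma>"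
  by (auto simp: freefor_conjl)

lemma topspace_coarsest: "topspace (coarsest_top X B) = X"
  by (auto simp: coarsest_top_def)

lemma openin_coarsest: "U \<in> B \<Longrightarrow> openin (coarsest_top X B) (U \<inter> X)"
  unfolding coarsest_top_def by (rule topology_generated_by_Basis) blast



locale setting =
  fixes af :: "'f \<Rightarrow> nat" and ar :: "'r \<Rightarrow> nat" and S :: "'s set"
    and T :: "(nat list \<times> ('f, 'r, 'd) fm \<times> ('f, 'r, 'd) fm) set"
    and x y :: "nat list" and \<phi> \<psi> :: "('f, 'r, 'd) fm"
    and g :: "('f, 'r, 's) str \<times> 's set list \<Rightarrow> ('f, 'r, 's) str \<times> 's set list"
  assumes inf: "infinite S" and gt: "geometric_theory af ar T"
    and dx: "distinct x" and dy: "distinct y" and dxy: "set x \<inter> set y = {}"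
    and w\<phi>: "wff af ar \<phi>" and F\<phi>: "FV \<phi> \<subseteq> set x"
    and w\<psi>: "wff af ar \<psi>" and F\<psi>: "FV \<psi> \<subseteq> set y"
    and mor: "eqsh_mor af ar S T x \<phi> y \<psi> g"
begin

lemma dxy': "distinct (x @ y)" using dx dy dxy by simp

lemma g_ext: "e \<in> extn af ar S T x \<phi> \<Longrightarrow> g e \<in> extn af ar S T y \<psi>"
  using mor continuous_map_image_subset_topspace[of "ext_top af ar S T x \<phi>" "ext_top af ar S T y \<psi>" g]
  unfolding eqsh_mor_def ext_top_def topspace_coarsest by blast

lemma g_fst: "e \<in> extn af ar S T x \<phi> \<Longrightarrow> fst (g e) = fst e"
  using mor unfolding eqsh_mor_def by blast

lemma g_equi: "i \<in> IT af ar S T \<Longrightarrow> e \<in> extn af ar S T x \<phi> \<Longrightarrow> fst e = isod i \<Longrightarrow> g (act i e) = act i (g e)"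
  using mor unfolding eqsh_mor_def by blast

lemma g_open: "openin (ext_top af ar S T y \<psi>) U \<Longrightarrow>
    openin (ext_top af ar S T x \<phi>) {e \<in> extn af ar S T x \<phi>. g e \<in> U}"
  using mor openin_continuous_map_preimage[of "ext_top af ar S T x \<phi>" "ext_top af ar S T y \<psi>" g U]
  unfolding eqsh_mor_def by (simp add: ext_top_def topspace_coarsest)

definition "m0 = Suc (Max (insert 0 (set (x @ y))))"
definition "base = m0 + length y"
definition "nu cs c = base + pos cs c"

definition zeq :: "nat list \<Rightarrow> ('s \<Rightarrow> nat) \<Rightarrow> 's list \<Rightarrow> ('f, 'r, 'd) fm" where
  "zeq vs \<nu> cs = conjl (map (\<lambda>(v, c). Eq (Var v) (Var (\<nu> c))) (zip vs cs))"

definition body :: "'s list \<Rightarrow> ('f, 'r, 's) fact list \<Rightarrow> 's list \<Rightarrow> 's list \<Rightarrow> ('f, 'r, 'd) fm" where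
  "body cs Fs a0 b0 = conjl (map (trF af ar (nu cs)) Fs @ [zeq x (nu cs) a0, zeq y (nu cs) b0])"

definition thj :: "'s list \<times> ('f, 'r, 's) fact list \<times> 's list \<times> 's list \<Rightarrow> ('f, 'r, 'd) fm" where
  "thj j = (case j of (cs, Fs, a0, b0) \<Rightarrow> exs (map (nu cs) cs) (body cs Fs a0 b0))"

definition Jsh :: "'s list \<times> ('f, 'r, 's) fact list \<times> 's list \<times> 's list \<Rightarrow> bool" where
  "Jsh j = (case j of (cs, Fs, a0, b0) \<Rightarrow> distinct cs \<and> (\<forall>fa\<in>set Fs. felems fa \<subseteq> set cs) \<and>
     set a0 \<subseteq> set cs \<and> set b0 \<subseteq> set cs \<and> length a0 = length x \<and> length b0 = length y)"

definition J :: "('s list \<times> ('f, 'r, 's) fact list \<times> 's list \<times> 's list) set" where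
  "J = {(cs, Fs, a0, b0). Jsh (cs, Fs, a0, b0) \<and> set cs \<subseteq> S \<and>
     (\<forall>N\<in>MT af ar S T. (\<forall>c\<in>set cs. inM N c) \<and> holdsL N Fs \<and> map (cls N) a0 \<in> interp N x \<phi> \<longrightarrow>
        g (N, map (cls N) a0) = (N, map (cls N) b0))}"

lemma var_lt: "v \<in> set x \<union> set y \<Longrightarrow> v < m0"
proof -
  assume "v \<in> set x \<union> set y"
  then have "v \<le> Max (insert 0 (set (x @ y)))" by (intro Max_ge) auto
  then show ?thesis by (simp add: m0_def)
qed

lemma nu_inj: "inj_on (nu cs) (set cs)"
proof (rule inj_onI)
  fix c c' assume "c \<in> set cs" "c' \<in> set cs" "nu cs c = nu cs c'"
  then have "pos cs c = pos cs c'" by (simp add: nu_def)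
  then show "c = c'" using pos_nth[OF \<open>c \<in> set cs\<close>] pos_nth[OF \<open>c' \<in> set cs\<close>] by metis
qed

lemma sat_thj:
  assumes "Jsh (cs, Fs, a0, b0)" "length as = length x" "length bs = length y"
  shows "sat N (val (x @ y) (as @ bs)) (thj (cs, Fs, a0, b0)) \<longleftrightarrow>
    (\<exists>E. (\<forall>c\<in>set cs. E c \<in> carr N) \<and> (\<forall>fa\<in>set Fs. holdsD af ar N E fa) \<and> as = map E a0 \<and> bs = map E b0)"
proof -
  define \<rho> where "\<rho> = val (x @ y) (as @ bs)"
  define ws where "ws = map (nu cs) cs"
  have J: "distinct cs" "\<forall>fa\<in>set Fs. felems fa \<subseteq> set cs" "set a0 \<subseteq> set cs" "set b0 \<subseteq> set cs"
    "length a0 = length x" "length b0 = length y" using assms(1) by (auto simp: Jsh_def)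
  have dws: "distinct ws" using J(1) nu_inj by (simp add: ws_def distinct_map)
  have ws_ge: "w \<ge> m0" if "w \<in> set ws" for w using that by (auto simp: ws_def nu_def base_def)
  have rx: "map \<rho> x = as" "map \<rho> y = bs" using val_app_map[OF dxy' assms(2,3)] by (simp_all add: \<rho>_def)
  have key: "sat N (updl \<rho> ws ds) (body cs Fs a0 b0) \<longleftrightarrow>
      (\<forall>fa\<in>set Fs. holdsD af ar N (\<lambda>c. ds ! pos cs c) fa) \<and> as = map (\<lambda>c. ds ! pos cs c) a0 \<and>
      bs = map (\<lambda>c. ds ! pos cs c) b0" if lds: "length ds = length cs" for ds
  proof -
    let ?r = "updl \<rho> ws ds"
    have r1: "?r (nu cs c) = ds ! pos cs c" if "c \<in> set cs" for c
    proof -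
      have "ws ! pos cs c = nu cs c" using pos_nth[OF that] by (simp add: ws_def)
      then show ?thesis using updl_nth[OF dws, of ds "pos cs c" \<rho>] lds pos_nth[OF that] by (simp add: ws_def)
    qed
    have r2: "?r v = \<rho> v" if "v \<in> set x \<union> set y" for v
      using var_lt[OF that] ws_ge by (intro updl_notin) force
    have A1: "map ?r x = as" "map ?r y = bs" using r2 rx by (auto intro!: map_cong)
    have A2: "map (\<lambda>c. ?r (nu cs c)) a0 = map (\<lambda>c. ds ! pos cs c) a0"
      "map (\<lambda>c. ?r (nu cs c)) b0 = map (\<lambda>c. ds ! pos cs c) b0" using r1 J(3,4) by auto
    have hF: "(\<forall>fa\<in>set Fs. holdsD af ar N (\<lambda>c. ?r (nu cs c)) fa) \<longleftrightarrow> (\<forall>fa\<in>set Fs. holdsD af ar N (\<lambda>c. ds ! pos cs c) fa)"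
    proof -
      have "holdsD af ar N (\<lambda>c. ?r (nu cs c)) fa = holdsD af ar N (\<lambda>c. ds ! pos cs c) fa"
        if "fa \<in> set Fs" for fa using r1 J(2) that by (intro holdsD_cong) blast
      then show ?thesis by blast
    qed
    have hx: "sat N ?r (zeq x (nu cs) a0) \<longleftrightarrow> as = map (\<lambda>c. ds ! pos cs c) a0"
      unfolding zeq_def sat_zipeq[OF J(5)[symmetric]] A1 A2 ..
    have hy: "sat N ?r (zeq y (nu cs) b0) \<longleftrightarrow> bs = map (\<lambda>c. ds ! pos cs c) b0"
      unfolding zeq_def sat_zipeq[OF J(6)[symmetric]] A1 A2 ..
    have A: "sat N ?r (body cs Fs a0 b0) \<longleftrightarrow> (\<forall>fa\<in>set Fs. holdsD af ar N (\<lambda>c. ?r (nu cs c)) fa) \<and>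
        sat N ?r (zeq x (nu cs) a0) \<and> sat N ?r (zeq y (nu cs) b0)"
      unfolding body_def by (simp add: sat_conjl sat_trF) blast
    show ?thesis unfolding A hF hx hy ..
  qed
  have "sat N \<rho> (thj (cs, Fs, a0, b0)) \<longleftrightarrow>
      (\<exists>ds. length ds = length ws \<and> set ds \<subseteq> carr N \<and> sat N (updl \<rho> ws ds) (body cs Fs a0 b0))"
    unfolding thj_def using sat_exs[OF dws] by (simp add: ws_def)
  also have "\<dots> \<longleftrightarrow> (\<exists>E. (\<forall>c\<in>set cs. E c \<in> carr N) \<and> (\<forall>fa\<in>set Fs. holdsD af ar N E fa) \<and> as = map E a0 \<and> bs = map E b0)"
  proof
    assume "\<exists>ds. length ds = length ws \<and> set ds \<subseteq> carr N \<and> sat N (updl \<rho> ws ds) (body cs Fs a0 b0)"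
    then obtain ds where ds: "length ds = length cs" "set ds \<subseteq> carr N" "sat N (updl \<rho> ws ds) (body cs Fs a0 b0)"
      by (auto simp: ws_def)
    have "\<forall>c\<in>set cs. ds ! pos cs c \<in> carr N"
    proof
      fix c assume "c \<in> set cs"
      then have "pos cs c < length ds" using pos_nth ds(1) by metis
      then show "ds ! pos cs c \<in> carr N" using ds(2) nth_mem by blast
    qed
    then show "\<exists>E. (\<forall>c\<in>set cs. E c \<in> carr N) \<and> (\<forall>fa\<in>set Fs. holdsD af ar N E fa) \<and> as = map E a0 \<and> bs = map E b0"
      using key[OF ds(1)] ds(3) by (intro exI[of _ "\<lambda>c. ds ! pos cs c"]) simp
  next
    assume "\<exists>E. (\<forall>c\<in>set cs. E c \<in> carr N) \<and> (\<forall>fa\<in>set Fs. holdsD af ar N E fa) \<and> as = map E a0 \<and> bs = map E b0"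
    then obtain E where E: "\<forall>c\<in>set cs. E c \<in> carr N" "\<forall>fa\<in>set Fs. holdsD af ar N E fa" "as = map E a0" "bs = map E b0"
      by blast
    define ds where "ds = map E cs"
    have ld: "length ds = length cs" by (simp add: ds_def)
    have dsE: "ds ! pos cs c = E c" if "c \<in> set cs" for c using pos_nth[OF that] by (simp add: ds_def)
    have "holdsD af ar N (\<lambda>c. ds ! pos cs c) fa" if "fa \<in> set Fs" for fa
    proof -
      have "holdsD af ar N (\<lambda>c. ds ! pos cs c) fa = holdsD af ar N E fa"
        using J(2) dsE that by (intro holdsD_cong) blast
      then show ?thesis using E(2) that by blast
    qed
    then have "\<forall>fa\<in>set Fs. holdsD af ar N (\<lambda>c. ds ! pos cs c) fa" by blast
    moreover have "as = map (\<lambda>c. ds ! pos cs c) a0" "bs = map (\<lambda>c. ds ! pos cs c) b0"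
      using E(3,4) J(3,4) dsE by auto
    ultimately have "sat N (updl \<rho> ws ds) (body cs Fs a0 b0)" using key[OF ld] by blast
    moreover have "set ds \<subseteq> carr N" using E(1) by (auto simp: ds_def)
    ultimately show "\<exists>ds. length ds = length ws \<and> set ds \<subseteq> carr N \<and> sat N (updl \<rho> ws ds) (body cs Fs a0 b0)"
      using ld by (auto simp: ws_def)
  qed
  finally show ?thesis by (simp add: \<rho>_def)
qed


lemma fwd:
  assumes j: "j \<in> J" and N: "N \<in> MT af ar S T" and as: "as \<in> interp N x \<phi>" and lb: "length bs = length y"
    and sat: "sat N (val (x @ y) (as @ bs)) (thj j)"
  shows "g (N, as) = (N, bs)"
proof -
  obtain cs Fs a0 b0 where jd: "j = (cs, Fs, a0, b0)" by (cases j)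
  have Jsh: "Jsh (cs, Fs, a0, b0)" and csS: "set cs \<subseteq> S"
    and Jc: "\<forall>N\<in>MT af ar S T. (\<forall>c\<in>set cs. inM N c) \<and> holdsL N Fs \<and> map (cls N) a0 \<in> interp N x \<phi> \<longrightarrow>
        g (N, map (cls N) a0) = (N, map (cls N) b0)"
    using j jd by (auto simp: J_def)
  have J2: "\<forall>fa\<in>set Fs. felems fa \<subseteq> set cs" "set a0 \<subseteq> set cs" "set b0 \<subseteq> set cs" using Jsh by (auto simp: Jsh_def)
  have la: "length as = length x" using as by (simp add: interp_def)
  obtain E where E: "\<forall>c\<in>set cs. E c \<in> carr N" "\<forall>fa\<in>set Fs. holdsD af ar N E fa" "as = map E a0" "bs = map E b0"
    using sat_thj[OF Jsh la lb] sat jd by blast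
  have strN: "is_str af ar S N" using N by (simp add: MT_def)
  obtain N' \<Phi> where N': "is_str af ar S N'" and iso: "isoP af ar N N' \<Phi>" and cin: "\<forall>c\<in>set cs. c \<in> \<Phi> (E c)"
    using construct[OF strN inf finite_set csS, of E] E(1) by blast
  have N'M: "N' \<in> MT af ar S T" using MT_iso[OF N N' iso] .
  have bij: "bij_betw \<Phi> (carr N) (carr N')" using iso by (simp add: isoP_def)
  have cN: "\<forall>c\<in>set cs. inM N' c \<and> cls N' c = \<Phi> (E c)"
  proof
    fix c assume c: "c \<in> set cs"
    then have "\<Phi> (E c) \<in> carr N'" using E(1) bij by (auto simp: bij_betw_def)
    then show "inM N' c \<and> cls N' c = \<Phi> (E c)" using cls_eq[OF N'] cin c by (auto simp: inM_def)
  qed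
  have hold: "holdsL N' Fs"
    unfolding holdsL_def
  proof
    fix fa assume fa: "fa \<in> set Fs"
    show "holdsF N' fa"
      by (rule holdsD_F[OF strN N' iso _ E(2)[rule_format, OF fa]]) (use fa J2(1) E(1) cN in blast)
  qed
  have ma: "map (cls N') a0 = map \<Phi> as" using E(3) J2(2) cN by auto
  have mb: "map (cls N') b0 = map \<Phi> bs" using E(4) J2(3) cN by auto
  have "map \<Phi> as \<in> interp N' x \<phi>" using interp_iso[OF strN N' iso] as by auto
  then have g1: "g (N', map \<Phi> as) = (N', map \<Phi> bs)"
    using Jc N'M cN hold ma mb by auto
  have iIT: "(N, N', \<Phi>) \<in> IT af ar S T" using N N'M iso by (simp add: IT_iff)
  have e: "(N, as) \<in> extn af ar S T x \<phi>" using N as by (simp add: extn_def)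
  have "g (act (N, N', \<Phi>) (N, as)) = act (N, N', \<Phi>) (g (N, as))"
    using g_equi[OF iIT e] by (simp add: isod_def)
  then have "(N', map \<Phi> bs) = (N', map \<Phi> (snd (g (N, as))))"
    using g1 by (simp add: act_def isoc_def isofun_def)
  then have eqm: "map \<Phi> (snd (g (N, as))) = map \<Phi> bs" by simp
  have ge: "g (N, as) \<in> extn af ar S T y \<psi>" using g_ext[OF e] .
  have gf: "fst (g (N, as)) = N" using g_fst[OF e] by simp
  have "set (snd (g (N, as))) \<subseteq> carr N" using ge gf by (auto simp: extn_def interp_def)
  moreover have "set bs \<subseteq> carr N" using E(4) E(1) J2(3) by auto
  moreover have "inj_on \<Phi> (carr N)" using bij by (simp add: bij_betw_def)
  ultimately have "snd (g (N, as)) = bs" using eqm inj_on_map_eq_map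
    by (metis (no_types, lifting) inj_on_subset le_sup_iff)
  then show ?thesis using gf by (metis prod.collapse)
qed

lemma finite_felems: "finite (felems fa)"
  by (cases fa) auto

lemma bwd:
  assumes N: "N \<in> MT af ar S T" and as: "as \<in> interp N x \<phi>" and gN: "g (N, as) = (N, bs)"
  shows "\<exists>j\<in>J. sat N (val (x @ y) (as @ bs)) (thj j)"
proof -
  have e0: "(N, as) \<in> extn af ar S T x \<phi>" using N as by (simp add: extn_def)
  have bsi: "bs \<in> interp N y \<psi>" using g_ext[OF e0] gN by (simp add: extn_def)
  have strN: "is_str af ar S N" using N by (simp add: MT_def)
  obtain b0 where b0: "set b0 \<subseteq> S" "\<forall>b\<in>set b0. inM N b" "bs = map (cls N) b0"
    using reps[OF N, of bs] bsi by (auto simp: interp_def)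
  define W where "W = {(M, map (cls M) b0) | M. M \<in> MT af ar S T \<and> (\<forall>a\<in>set b0. inM M a) \<and>
           map (cls M) b0 \<in> interp M y \<psi>}"
  have Wsub: "W \<subseteq> extn af ar S T y \<psi>" by (auto simp: W_def extn_def)
  have "openin (ext_top af ar S T y \<psi>) (W \<inter> extn af ar S T y \<psi>)"
    unfolding ext_top_def by (rule openin_coarsest) (use b0(1) in \<open>auto simp: W_def\<close>)
  then have Wopen: "openin (ext_top af ar S T y \<psi>) W" using Wsub by (simp add: Int_absorb2)
  define Op where "Op = {e \<in> extn af ar S T x \<phi>. g e \<in> W}"
  have Oopen: "openin (ext_top af ar S T x \<phi>) Op" unfolding Op_def by (rule g_open[OF Wopen])
  have "g (N, as) \<in> W" using gN N b0 bsi by (auto simp: W_def)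
  then have e0O: "(N, as) \<in> Op" using e0 by (simp add: Op_def)
  obtain Fs a0 where Fs: "goodF S Fs" "set a0 \<subseteq> S" "(N, as) \<in> nb af ar S T x \<phi> Fs a0"
    "nb af ar S T x \<phi> Fs a0 \<subseteq> Op"
    using ext_open_nbhd[OF Oopen e0O] by blast
  have hN: "holdsL N Fs" "\<forall>a\<in>set a0. inM N a" "as = map (cls N) a0" using Fs(3) by (auto simp: nb_def)
  have "finite ((\<Union>fa\<in>set Fs. felems fa) \<union> set a0 \<union> set b0)"
    using finite_felems by blast
  then obtain cs where cs: "set cs = (\<Union>fa\<in>set Fs. felems fa) \<union> set a0 \<union> set b0" "distinct cs"
    using finite_distinct_list[OF \<open>finite _\<close>] by (elim exE conjE)
  have la: "length as = length x" using as by (simp add: interp_def)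
  have lb: "length bs = length y" using bsi by (simp add: interp_def)
  have Jsh: "Jsh (cs, Fs, a0, b0)" using cs la lb hN(3) b0(3) by (auto simp: Jsh_def)
  have csS: "set cs \<subseteq> S" using cs Fs(1,2) b0(1) by (auto simp: goodF_def)
  have Jc: "g (N', map (cls N') a0) = (N', map (cls N') b0)"
    if N': "N' \<in> MT af ar S T" "\<forall>c\<in>set cs. inM N' c" "holdsL N' Fs" "map (cls N') a0 \<in> interp N' x \<phi>" for N'
  proof -
    have "(N', map (cls N') a0) \<in> nb af ar S T x \<phi> Fs a0" using N' cs by (auto simp: nb_def extn_def)
    then have "(N', map (cls N') a0) \<in> Op" using Fs(4) by blast
    then have mem: "g (N', map (cls N') a0) \<in> W" and ext: "(N', map (cls N') a0) \<in> extn af ar S T x \<phi>"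
      by (auto simp: Op_def)
    then obtain M where M: "g (N', map (cls N') a0) = (M, map (cls M) b0)" by (auto simp: W_def)
    have "fst (g (N', map (cls N') a0)) = N'" using g_fst[OF ext] by simp
    then show ?thesis using M by simp
  qed
  have jJ: "(cs, Fs, a0, b0) \<in> J" using Jsh csS Jc by (auto simp: J_def)
  have inMcs: "\<forall>c\<in>set cs. inM N c" using cs hN(1,2) b0(2) holdsF_inM by (fastforce simp: holdsL_def)
  have "\<forall>c\<in>set cs. cls N c \<in> carr N" using inMcs cls_in[OF strN] by blast
  moreover have "\<forall>fa\<in>set Fs. holdsD af ar N (cls N) fa" using hN(1) holdsF_D[OF strN] by (auto simp: holdsL_def)
  ultimately have "sat N (val (x @ y) (as @ bs)) (thj (cs, Fs, a0, b0))"
    using sat_thj[OF Jsh la lb] hN(3) b0(3) by blast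
  then show ?thesis using jJ by blast
qed

end


lemma card_lists_le2:
  assumes "infinite B" "(card_of A, card_of B) \<in> ordLeq"
  shows "(card_of {l. set l \<subseteq> A}, card_of B) \<in> ordLeq"
proof -
  obtain f where f: "inj_on f A" "f ` A \<subseteq> B" using card_of_ordLeq[of A B] assms(2) by blast
  have "inj_on (map f) {l. set l \<subseteq> A}"
  proof (rule inj_onI)
    fix l l' assume "l \<in> {l. set l \<subseteq> A}" "l' \<in> {l. set l \<subseteq> A}" "map f l = map f l'"
    then show "l = l'" using inj_on_map_eq_map[of f l l'] f(1) by (auto intro: inj_on_subset)
  qed
  moreover have "map f ` {l. set l \<subseteq> A} \<subseteq> {l. set l \<subseteq> B}" using f(2) by fastforce
  ultimately have "(card_of {l. set l \<subseteq> A}, card_of {l. set l \<subseteq> B}) \<in> ordLeq"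
    using card_of_ordLeq[of "{l. set l \<subseteq> A}" "{l. set l \<subseteq> B}"] by blast
  then show ?thesis using card_lists_le[OF assms(1)] ordLeq_transitive by blast
qed

locale setting2 = setting af ar S T x y \<phi> \<psi> g
  for af :: "'f \<Rightarrow> nat" and ar :: "'r \<Rightarrow> nat" and S :: "'s set"
    and T :: "(nat list \<times> ('f, 'r, 'd) fm \<times> ('f, 'r, 'd) fm) set"
    and x y :: "nat list" and \<phi> \<psi> :: "('f, 'r, 'd) fm"
    and g :: "('f, 'r, 's) str \<times> 's set list \<Rightarrow> ('f, 'r, 's) str \<times> 's set list" +
  assumes cf: "(card_of (UNIV :: 'f set), card_of S) \<in> ordLeq"
    and cr: "(card_of (UNIV :: 'r set), card_of S) \<in> ordLeq"
    and cd: "(card_of S, card_of (UNIV :: 'd set)) \<in> ordLeq"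
begin

lemma J_card: "(card_of J, card_of S) \<in> ordLeq"
proof -
  let ?L = "{l. set l \<subseteq> S}"
  let ?FS = "{fa :: ('f, 'r, 's) fact. felems fa \<subseteq> S}"
  have FS: "(card_of ?FS, card_of S) \<in> ordLeq" by (rule card_facts_le[OF inf cf cr])
  have L: "(card_of ?L, card_of S) \<in> ordLeq" by (rule card_lists_le[OF inf])
  have LF: "(card_of {l. set l \<subseteq> ?FS}, card_of S) \<in> ordLeq" by (rule card_lists_le2[OF inf FS])
  have sub: "J \<subseteq> ?L \<times> ({l. set l \<subseteq> ?FS} \<times> (?L \<times> ?L))"
  proof
    fix j assume "j \<in> J"
    then obtain cs Fs a0 b0 where j: "j = (cs, Fs, a0, b0)" "set cs \<subseteq> S" "\<forall>fa\<in>set Fs. felems fa \<subseteq> set cs"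
      "set a0 \<subseteq> set cs" "set b0 \<subseteq> set cs" by (auto simp: J_def Jsh_def)
    then show "j \<in> ?L \<times> ({l. set l \<subseteq> ?FS} \<times> (?L \<times> ?L))" by blast
  qed
  have "(card_of (?L \<times> ({l. set l \<subseteq> ?FS} \<times> (?L \<times> ?L))), card_of S) \<in> ordLeq"
    by (rule card_Times_le[OF inf L card_Times_le[OF inf LF card_Times_le[OF inf L L]]])
  then show ?thesis using card_of_mono1[OF sub] ordLeq_transitive by blast
qed

lemma J_inj: "\<exists>h :: _ \<Rightarrow> 'd. inj_on h J"
proof -
  have "(card_of J, card_of (UNIV :: 'd set)) \<in> ordLeq" using J_card cd ordLeq_transitive by blast
  then show ?thesis using card_of_ordLeq[of J "UNIV :: 'd set"] by blast
qed

definition "hJ = (SOME h :: _ \<Rightarrow> 'd. inj_on h J)"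

lemma hJ: "inj_on hJ J"
  unfolding hJ_def using J_inj by (rule someI_ex)

definition \<theta> :: "('f, 'r, 'd) fm" where
  "\<theta> = Conj \<phi> (Disj (hJ ` J) (\<lambda>d. thj (inv_into J hJ d)))"

lemma sat_\<theta>:
  assumes N: "N \<in> MT af ar S T" and l: "length as = length x" "length bs = length y"
    and c: "set as \<subseteq> carr N" "set bs \<subseteq> carr N"
  shows "sat N (val (x @ y) (as @ bs)) \<theta> \<longleftrightarrow> as \<in> interp N x \<phi> \<and> g (N, as) = (N, bs)"
proof -
  let ?\<rho> = "val (x @ y) (as @ bs)"
  have s\<phi>: "sat N ?\<rho> \<phi> \<longleftrightarrow> sat N (val x as) \<phi>"
    using F\<phi> val_app_eq_x[OF dxy' l] by (intro sat_cong) blast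
  have sD: "sat N ?\<rho> (Disj (hJ ` J) (\<lambda>d. thj (inv_into J hJ d))) \<longleftrightarrow> (\<exists>j\<in>J. sat N ?\<rho> (thj j))"
    using hJ by (auto simp: inv_into_f_f)
  show ?thesis
  proof
    assume "sat N ?\<rho> \<theta>"
    then have a: "sat N (val x as) \<phi>" "\<exists>j\<in>J. sat N ?\<rho> (thj j)" using s\<phi> sD by (auto simp: \<theta>_def)
    then have ai: "as \<in> interp N x \<phi>" using l c by (simp add: interp_def)
    from a(2) obtain j where "j \<in> J" "sat N ?\<rho> (thj j)" by blast
    then show "as \<in> interp N x \<phi> \<and> g (N, as) = (N, bs)" using fwd[OF _ N ai l(2)] ai by blast
  next
    assume a: "as \<in> interp N x \<phi> \<and> g (N, as) = (N, bs)"
    then have "\<exists>j\<in>J. sat N ?\<rho> (thj j)" using bwd[OF N] by blast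
    moreover have "sat N ?\<rho> \<phi>" using s\<phi> a by (simp add: interp_def)
    ultimately show "sat N ?\<rho> \<theta>" using sD by (simp add: \<theta>_def)
  qed
qed

end


lemma ren_notin: "u \<notin> set y \<Longrightarrow> ren y z u = Var u"
proof -
  assume "u \<notin> set y"
  then have "map_of (zip y z) u = None" by (auto simp: map_of_eq_None_iff dest: set_zip_leftD)
  then show ?thesis by (simp add: ren_def)
qed

lemma ren_nth: "distinct y \<Longrightarrow> length y = length z \<Longrightarrow> i < length y \<Longrightarrow> ren y z (y ! i) = Var (z ! i)"
  by (simp add: ren_def map_of_zip_nth)

lemma FVt_ren: "FVt (ren y z u) \<subseteq> insert u (set z)"
  by (auto simp: ren_def split: option.splits dest: map_of_SomeD set_zip_rightD)

context setting2
begin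

definition "zz = map (\<lambda>i. m0 + i) [0..<length y]"

lemma zz: "length zz = length y" "distinct zz" "\<forall>w\<in>set zz. m0 \<le> w \<and> w < base"
  by (auto simp: zz_def base_def distinct_map inj_on_def)

lemma zz_disj: "set zz \<inter> set (x @ y) = {}"
  using zz(3) var_lt by fastforce

lemma wff_thj: "wff af ar (thj j)"
  by (cases j) (auto simp: thj_def wff_exs body_def wff_conjl wff_trF zeq_def)

lemma FV_thj: "Jsh j \<Longrightarrow> FV (thj j) \<subseteq> set x \<union> set y"
proof -
  assume "Jsh j"
  then obtain cs Fs a0 b0 where j: "j = (cs, Fs, a0, b0)" "\<forall>fa\<in>set Fs. felems fa \<subseteq> set cs"
    "set a0 \<subseteq> set cs" "set b0 \<subseteq> set cs" by (cases j) (auto simp: Jsh_def)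
  have "FV (body cs Fs a0 b0) \<subseteq> set x \<union> set y \<union> nu cs ` set cs"
  proof -
    have "FV (trF af ar (nu cs) fa) \<subseteq> nu cs ` set cs" if "fa \<in> set Fs" for fa
      using FV_trF[of af ar "nu cs" fa] j(2) that by blast
    moreover have "FV (zeq x (nu cs) a0) \<subseteq> set x \<union> nu cs ` set cs"
      using FV_zipeq[where vs=x and \<nu>="nu cs" and cs=a0] j(3) unfolding zeq_def by blast
    moreover have "FV (zeq y (nu cs) b0) \<subseteq> set y \<union> nu cs ` set cs"
      using FV_zipeq[where vs=y and \<nu>="nu cs" and cs=b0] j(4) unfolding zeq_def by blast
    ultimately show ?thesis unfolding body_def FV_conjl by auto
  qed
  then show ?thesis using j(1) by (auto simp: thj_def FV_exs)
qed

lemma J_Jsh: "j \<in> J \<Longrightarrow> Jsh j"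
  by (auto simp: J_def)

lemma wff_\<theta>: "wff af ar \<theta>"
  using w\<phi> wff_thj by (simp add: \<theta>_def)

lemma FV_\<theta>: "FV \<theta> \<subseteq> set x \<union> set y"
proof -
  have "FV (thj (inv_into J hJ d)) \<subseteq> set x \<union> set y" if "d \<in> hJ ` J" for d
    using FV_thj[OF J_Jsh[OF inv_into_into[OF that]]] .
  then show ?thesis using F\<phi> by (auto simp: \<theta>_def)
qed

lemma freefor_thj:
  assumes "\<forall>w. base \<le> w \<longrightarrow> (\<forall>u. u \<noteq> w \<longrightarrow> w \<notin> FVt (\<sigma> u))"
  shows "freefor (thj j) \<sigma>"
proof -
  obtain cs Fs a0 b0 where j: "j = (cs, Fs, a0, b0)" by (cases j)
  have "\<forall>w\<in>set (map (nu cs) cs). \<forall>u. u \<noteq> w \<longrightarrow> w \<notin> FVt (\<sigma> u)"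
    using assms by (auto simp: nu_def)
  moreover have "\<forall>\<sigma>. freefor (body cs Fs a0 b0) \<sigma>"
    by (auto simp: body_def freefor_conjl freefor_trF zeq_def)
  ultimately have "freefor (exs (map (nu cs) cs) (body cs Fs a0 b0)) \<sigma>" by (rule freefor_exs)
  then show ?thesis using j by (simp add: thj_def)
qed

lemma freefor_\<theta>_ren: "freefor \<theta> (ren y zz)"
proof -
  have "freefor \<phi> (ren y zz)"
    using F\<phi> dxy by (intro freefor_id) (auto intro: ren_notin)
  moreover have "\<forall>w. base \<le> w \<longrightarrow> (\<forall>u. u \<noteq> w \<longrightarrow> w \<notin> FVt (ren y zz u))"
    using FVt_ren[of y zz] zz(3) by fastforce
  then have "\<forall>j. freefor (thj j) (ren y zz)" using freefor_thj by blast
  ultimately show ?thesis unfolding \<theta>_def by (simp del: split_paired_All)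
qed


lemma interp_split:
  assumes "zs \<in> interp N (l1 @ l2) \<chi>"
  shows "\<exists>as bs. zs = as @ bs \<and> length as = length l1 \<and> length bs = length l2 \<and> set as \<subseteq> carr N \<and>
    set bs \<subseteq> carr N \<and> sat N (val (l1 @ l2) (as @ bs)) \<chi>"
proof -
  have z: "length zs = length l1 + length l2" "set zs \<subseteq> carr N" "sat N (val (l1 @ l2) zs) \<chi>"
    using assms by (auto simp: interp_def)
  have "set (take (length l1) zs) \<subseteq> carr N" "set (drop (length l1) zs) \<subseteq> carr N"
    using z(2) set_take_subset set_drop_subset by (metis subset_trans)+
  then show ?thesis using z
    by (intro exI[of _ "take (length l1) zs"] exI[of _ "drop (length l1) zs"]) simp
qed

lemma g_pair:
  assumes "N \<in> MT af ar S T" "as \<in> interp N x \<phi>"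
  shows "g (N, as) = (N, snd (g (N, as))) \<and> snd (g (N, as)) \<in> interp N y \<psi>"
proof -
  have e: "(N, as) \<in> extn af ar S T x \<phi>" using assms by (simp add: extn_def)
  have "fst (g (N, as)) = N" using g_fst[OF e] by simp
  moreover have "g (N, as) \<in> extn af ar S T y \<psi>" using g_ext[OF e] .
  ultimately show ?thesis by (cases "g (N, as)") (auto simp: extn_def)
qed

lemma valid1: "N \<in> MT af ar S T \<Longrightarrow> valid_in N (x @ y) \<theta> (Conj \<phi> \<psi>)"
  unfolding valid_in_def
proof
  fix zs assume N: "N \<in> MT af ar S T" and zs: "zs \<in> interp N (x @ y) \<theta>"
  obtain as bs where ab: "zs = as @ bs" "length as = length x" "length bs = length y" "set as \<subseteq> carr N"
    "set bs \<subseteq> carr N" "sat N (val (x @ y) (as @ bs)) \<theta>" using interp_split[OF zs] by blast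
  have 1: "as \<in> interp N x \<phi>" "g (N, as) = (N, bs)" using sat_\<theta>[OF N ab(2-5)] ab(6) by auto
  have "bs \<in> interp N y \<psi>" using g_pair[OF N 1(1)] 1(2) by simp
  then have "sat N (val y bs) \<psi>" by (simp add: interp_def)
  then have "sat N (val (x @ y) (as @ bs)) \<psi>"
    using F\<psi> val_app_eq_y[OF dxy' ab(2,3)] sat_cong[of \<psi> "val (x @ y) (as @ bs)" "val y bs" N] by auto
  moreover have "sat N (val (x @ y) (as @ bs)) \<phi>"
    using 1(1) F\<phi> val_app_eq_x[OF dxy' ab(2,3)] sat_cong[of \<phi> "val (x @ y) (as @ bs)" "val x as" N]
    by (auto simp: interp_def)
  ultimately show "zs \<in> interp N (x @ y) (Conj \<phi> \<psi>)" using zs by (simp add: interp_def ab(1))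
qed

lemma valid2: "N \<in> MT af ar S T \<Longrightarrow> valid_in N x \<phi> (exs y \<theta>)"
  unfolding valid_in_def
proof
  fix as assume N: "N \<in> MT af ar S T" and as: "as \<in> interp N x \<phi>"
  define bs where "bs = snd (g (N, as))"
  have gp: "g (N, as) = (N, bs)" "bs \<in> interp N y \<psi>" using g_pair[OF N as] by (simp_all add: bs_def)
  have la: "length as = length x" "set as \<subseteq> carr N" using as by (auto simp: interp_def)
  have lb: "length bs = length y" "set bs \<subseteq> carr N" using gp(2) by (auto simp: interp_def)
  have s: "sat N (val (x @ y) (as @ bs)) \<theta>" using sat_\<theta>[OF N la(1) lb(1) la(2) lb(2)] as gp(1) by simp
  have agree: "updl (val x as) y bs v = val (x @ y) (as @ bs) v" if "v \<in> FV \<theta>" for v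
  proof -
    have "v \<in> set x \<union> set y" using FV_\<theta> that by blast
    then show ?thesis
    proof
      assume v: "v \<in> set x"
      then have "v \<notin> set y" using dxy by blast
      then show ?thesis using updl_notin val_app_eq_x[OF dxy' la(1) lb(1) v] by metis
    next
      assume "v \<in> set y"
      then obtain i where i: "i < length y" "v = y ! i" by (auto simp: in_set_conv_nth)
      then show ?thesis using updl_nth[OF dy, of bs i] val_app_y[OF dxy' la(1) lb(1) i(1)] lb(1) by simp
    qed
  qed
  have "sat N (updl (val x as) y bs) \<theta>" using s sat_cong[of \<theta> "updl (val x as) y bs" "val (x @ y) (as @ bs)" N] agree by blast
  then have "sat N (val x as) (exs y \<theta>)" using sat_exs[OF dy] lb by blast
  then show "as \<in> interp N x (exs y \<theta>)" using as by (simp add: interp_def)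
qed


lemma valid3: "N \<in> MT af ar S T \<Longrightarrow> valid_in N (x @ y @ zz) (Conj \<theta> (subst \<theta> (ren y zz))) (eqs (zip y zz))"
  unfolding valid_in_def
proof
  fix ws assume N: "N \<in> MT af ar S T" and ws0: "ws \<in> interp N (x @ y @ zz) (Conj \<theta> (subst \<theta> (ren y zz)))"
  have ws: "ws \<in> interp N ((x @ y) @ zz) (Conj \<theta> (subst \<theta> (ren y zz)))" using ws0 by simp
  obtain ab cs where abc: "ws = ab @ cs" "length ab = length (x @ y)" "length cs = length zz" "set ab \<subseteq> carr N"
    "set cs \<subseteq> carr N" "sat N (val ((x @ y) @ zz) (ab @ cs)) (Conj \<theta> (subst \<theta> (ren y zz)))"
    using interp_split[OF ws] by blast
  define as where "as = take (length x) ab"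
  define bs where "bs = drop (length x) ab"
  have st: "set as \<subseteq> set ab" "set bs \<subseteq> set ab" unfolding as_def bs_def by (rule set_take_subset, rule set_drop_subset)
  have ab: "ab = as @ bs" "length as = length x" "length bs = length y" "set as \<subseteq> carr N" "set bs \<subseteq> carr N"
    using abc(2,4) st by (auto simp: as_def bs_def)
  have lcs: "length cs = length y" using abc(3) zz(1) by simp
  define \<rho> where "\<rho> = val ((x @ y) @ zz) (ab @ cs)"
  have d3: "distinct ((x @ y) @ zz)" using dxy' zz(2) zz_disj by auto
  have rxy: "\<rho> v = val (x @ y) (as @ bs) v" if "v \<in> set (x @ y)" for v
    using val_app_eq_x[OF d3 abc(2,3) that] ab(1) by (simp add: \<rho>_def)
  have rz: "\<rho> (zz ! i) = cs ! i" if "i < length y" for i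
  proof -
    have "zz ! i \<in> set zz" using that zz(1) by simp
    then have "\<rho> (zz ! i) = val zz cs (zz ! i)" using val_app_eq_y[OF d3 abc(2,3)] by (simp add: \<rho>_def)
    then show ?thesis using val_x[OF zz(2), of cs i] abc(3) that zz(1) by simp
  qed
  have ry: "\<rho> (y ! i) = bs ! i" if "i < length y" for i
    using rxy[of "y ! i"] that val_app_y[OF dxy' ab(2,3) that] by simp
  have s1: "sat N \<rho> \<theta>" and s2: "sat N \<rho> (subst \<theta> (ren y zz))" using abc(6) by (simp_all add: \<rho>_def)
  have "sat N (val (x @ y) (as @ bs)) \<theta>"
    using s1 FV_\<theta> rxy sat_cong[of \<theta> \<rho> "val (x @ y) (as @ bs)" N] by auto
  then have g1: "g (N, as) = (N, bs)" using sat_\<theta>[OF N ab(2,3,4,5)] by simp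
  have s3: "sat N (\<lambda>v. evalt N \<rho> (ren y zz v)) \<theta>" using iffD1[OF sat_subst[OF freefor_\<theta>_ren] s2] .
  have agree: "evalt N \<rho> (ren y zz v) = val (x @ y) (as @ cs) v" if "v \<in> FV \<theta>" for v
  proof -
    have "v \<in> set x \<union> set y" using FV_\<theta> that by blast
    then show ?thesis
    proof
      assume v: "v \<in> set x"
      then have "v \<notin> set y" using dxy by blast
      then have "ren y zz v = (Var v :: 'f trm)" by (rule ren_notin)
      then show ?thesis using rxy[of v] v val_app_eq_x[OF dxy' ab(2,3) v] val_app_eq_x[OF dxy' ab(2) lcs v] by simp
    next
      assume "v \<in> set y"
      then obtain i where i: "i < length y" "v = y ! i" by (auto simp: in_set_conv_nth)
      then have "ren y zz v = (Var (zz ! i) :: 'f trm)" using ren_nth[OF dy zz(1)[symmetric]] by simp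
      then show ?thesis using rz[OF i(1)] val_app_y[OF dxy' ab(2) lcs i(1)] i(2) by simp
    qed
  qed
  have "sat N (val (x @ y) (as @ cs)) \<theta>"
    using s3 agree sat_cong[of \<theta> "\<lambda>v. evalt N \<rho> (ren y zz v)" "val (x @ y) (as @ cs)" N] by auto
  then have g2: "g (N, as) = (N, cs)" using sat_\<theta>[OF N ab(2) lcs ab(4) abc(5)] by simp
  have bc: "bs = cs" using g1 g2 by simp
  have "sat N \<rho> (eqs (zip y zz))"
    unfolding sat_eqs
  proof (intro ballI, clarify)
    fix u w assume "(u, w) \<in> set (zip y zz)"
    then obtain i where i: "i < length y" "u = y ! i" "w = zz ! i" using zz(1) by (auto simp: set_zip)
    then show "\<rho> u = \<rho> w" using ry rz bc by simp
  qed
  then show "ws \<in> interp N (x @ y @ zz) (eqs (zip y zz))" using ws0 by (simp add: interp_def \<rho>_def abc(1))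
qed

lemma induced: "e \<in> extn af ar S T x \<phi> \<Longrightarrow> g e = induced_map x y \<theta> e"
proof -
  assume e: "e \<in> extn af ar S T x \<phi>"
  then obtain N as where eN: "e = (N, as)" "N \<in> MT af ar S T" "as \<in> interp N x \<phi>" by (auto simp: extn_def)
  define bs where "bs = snd (g (N, as))"
  have gp: "g (N, as) = (N, bs)" "bs \<in> interp N y \<psi>" using g_pair[OF eN(2,3)] by (simp_all add: bs_def)
  have la: "length as = length x" "set as \<subseteq> carr N" using eN(3) by (auto simp: interp_def)
  have "(THE bs'. as @ bs' \<in> interp N (x @ y) \<theta>) = bs"
  proof (rule the_equality)
    have lb: "length bs = length y" "set bs \<subseteq> carr N" using gp(2) by (auto simp: interp_def)
    then show "as @ bs \<in> interp N (x @ y) \<theta>"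
      using sat_\<theta>[OF eN(2) la(1) lb(1) la(2) lb(2)] eN(3) gp(1) la by (simp add: interp_def)
  next
    fix bs' assume "as @ bs' \<in> interp N (x @ y) \<theta>"
    then have b': "length bs' = length y" "set bs' \<subseteq> carr N" "sat N (val (x @ y) (as @ bs')) \<theta>"
      using la by (auto simp: interp_def)
    then have "g (N, as) = (N, bs')" using sat_\<theta>[OF eN(2) la(1) b'(1) la(2) b'(2)] by simp
    then show "bs' = bs" using gp(1) by simp
  qed
  then show ?thesis using eN(1) gp(1) by (simp add: induced_map_def)
qed


end


context setting2
begin

lemma main:
  assumes em: "enough_models af ar S T"
  shows "prov_functional af ar T x \<phi> y \<psi> \<theta> \<and> (\<forall>e\<in>extn af ar S T x \<phi>. g e = induced_map x y \<theta> e)"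
proof -
  have prv: "prv af ar T xs \<alpha> \<beta>" if "seq_ok af ar xs \<alpha> \<beta>" "\<And>N. N \<in> MT af ar S T \<Longrightarrow> valid_in N xs \<alpha> \<beta>" for xs \<alpha> \<beta>
    using em that unfolding enough_models_def by blast
  have "seq_ok af ar (x @ y) \<theta> (Conj \<phi> \<psi>)"
    unfolding seq_ok_def using dxy' wff_\<theta> w\<phi> w\<psi> FV_\<theta> F\<phi> F\<psi> by auto
  then have p1: "prv af ar T (x @ y) \<theta> (Conj \<phi> \<psi>)" using prv valid1 by blast
  have "seq_ok af ar x \<phi> (exs y \<theta>)"
    unfolding seq_ok_def wff_exs FV_exs using dx wff_\<theta> w\<phi> FV_\<theta> F\<phi> by auto
  then have p2: "prv af ar T x \<phi> (exs y \<theta>)" using prv valid2 by blast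
  have wren: "\<forall>v. wft af (ren y zz v)" by (auto simp: ren_def split: option.splits)
  have "distinct ((x @ y) @ zz)" using dxy' zz(2) zz_disj by auto
  then have d3: "distinct (x @ y @ zz)" by (simp only: append_assoc)
  have FVs: "FV (subst \<theta> (ren y zz)) \<subseteq> set x \<union> set zz"
  proof
    fix w assume "w \<in> FV (subst \<theta> (ren y zz))"
    then obtain u where u: "u \<in> FV \<theta>" "w \<in> FVt (ren y zz u :: 'f trm)" using FV_subst[of \<theta> "ren y zz"] by blast
    then have "u \<in> set x \<union> set y" using FV_\<theta> by blast
    then show "w \<in> set x \<union> set zz"
    proof
      assume "u \<in> set x"
      then have "u \<notin> set y" using dxy by blast
      then have "ren y zz u = (Var u :: 'f trm)" by (rule ren_notin)
      then have "w = u" using u(2) by simp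
      then show ?thesis using \<open>u \<in> set x\<close> by simp
    next
      assume "u \<in> set y"
      then obtain i where "i < length y" "u = y ! i" by (auto simp: in_set_conv_nth)
      then have "ren y zz u = (Var (zz ! i) :: 'f trm)" using ren_nth[OF dy zz(1)[symmetric]] by simp
      then have "w = zz ! i" using u(2) by simp
      then show ?thesis using \<open>i < length y\<close> zz(1) by simp
    qed
  qed
  have FVeqs: "FV (eqs (zip y zz) :: ('f, 'r, 'd) fm) \<subseteq> set y \<union> set zz"
    by (auto simp: FV_eqs dest: set_zip_leftD set_zip_rightD)
  have "seq_ok af ar (x @ y @ zz) (Conj \<theta> (subst \<theta> (ren y zz))) (eqs (zip y zz))"
    unfolding seq_ok_def using d3 wff_\<theta> wff_subst[OF wff_\<theta> wren] wff_eqs FV_\<theta> FVs FVeqs by auto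
  then have p3: "prv af ar T (x @ y @ zz) (Conj \<theta> (subst \<theta> (ren y zz))) (eqs (zip y zz))"
    using prv valid3 by blast
  have ex: "\<exists>z. length z = length y \<and> distinct z \<and> set z \<inter> set (x @ y) = {} \<and>
          freefor \<theta> (ren y z) \<and>
          prv af ar T (x @ y @ z) (Conj \<theta> (subst \<theta> (ren y z))) (eqs (zip y z))"
    using zz(1,2) zz_disj freefor_\<theta>_ren p3 by (intro exI[of _ zz] conjI)
  have FVxy: "FV \<theta> \<subseteq> set (x @ y)" using FV_\<theta> by simp
  have "prov_functional af ar T x \<phi> y \<psi> \<theta>"
    unfolding prov_functional_def using wff_\<theta> FVxy p1 p2 ex by (intro conjI)
  then show ?thesis using induced by blast
qed


end


theorem corollary3p13:
  fixes af :: "'f \<Rightarrow> nat" and ar :: "'r \<Rightarrow> nat" and S :: "'s set"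
    and \<kappa> :: "'k rel"
    and T :: "(nat list \<times> ('f, 'r, 'd) fm \<times> ('f, 'r, 'd) fm) set"
    and x y :: "nat list" and \<phi> \<psi> :: "('f, 'r, 'd) fm"
    and g :: "('f, 'r, 's) str \<times> 's set list \<Rightarrow> ('f, 'r, 's) str \<times> 's set list"
  assumes "Card_order \<kappa>" and "(natLeq, \<kappa>) \<in> ordLeq"
    and "(card_of (UNIV :: ('f + 'r) set), \<kappa>) \<in> ordLeq"
    and "(\<kappa>, card_of S) \<in> ordLeq"
    and "(card_of S, card_of (UNIV :: 'd set)) \<in> ordLeq"
    and "geometric_theory af ar T"
    and "enough_models af ar S T"
    and "distinct x" and "distinct y" and "set x \<inter> set y = {}"
    and "wff af ar \<phi>" and "FV \<phi> \<subseteq> set x"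
    and "wff af ar \<psi>" and "FV \<psi> \<subseteq> set y"
    and "eqsh_mor af ar S T x \<phi> y \<psi> g"
  shows "\<exists>\<theta>. prov_functional af ar T x \<phi> y \<psi> \<theta> \<and>
           (\<forall>e\<in>extn af ar S T x \<phi>. g e = induced_map x y \<theta> e)"
proof -
  have nS: "(natLeq, card_of S) \<in> ordLeq" using assms(2) assms(4) ordLeq_transitive by blast
  then have inf: "infinite S" using infinite_iff_natLeq_ordLeq by blast
  have fr: "(card_of (UNIV :: 'f set), card_of (UNIV :: ('f + 'r) set)) \<in> ordLeq"
    using card_of_ordLeq[of "UNIV :: 'f set" "UNIV :: ('f + 'r) set"] inj_Inl by blast
  have rr: "(card_of (UNIV :: 'r set), card_of (UNIV :: ('f + 'r) set)) \<in> ordLeq"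
    using card_of_ordLeq[of "UNIV :: 'r set" "UNIV :: ('f + 'r) set"] inj_Inr by blast
  have frS: "(card_of (UNIV :: ('f + 'r) set), card_of S) \<in> ordLeq" using assms(3) assms(4) ordLeq_transitive by blast
  have cf: "(card_of (UNIV :: 'f set), card_of S) \<in> ordLeq" using fr frS ordLeq_transitive by blast
  have cr: "(card_of (UNIV :: 'r set), card_of S) \<in> ordLeq" using rr frS ordLeq_transitive by blast
  interpret setting2 af ar S T x y \<phi> \<psi> g
    by unfold_locales (use inf assms(6,8-15) cf cr assms(5) in auto)
  show ?thesis using main[OF assms(7)] by blast
qed

end
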